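(* Assume (H1), (H3), (H4) with $\alpha+1=p^*$. There exist $\Lambda^*>0$ and $D_2>0$ such that for every $\lambda\in(0,\Lambda^* )$ there is $D_1=D_1(\lambda)>D_2$ with $$\int_\Omega H(\nabla U)^p\,dx\ge D_1>D_2\ge\int_\Omega\big(H(\nabla u)^p+\mu(x)H(\nabla u)^q\big)dx\quad\text{for all }u\in M_\lambda^+,\ U\in M_\lambda^-.$$
   Context: Let $\Omega\subset\mathbb R^N$, $N\ge2$, be a bounded Lipschitz domain; $H$ is a Finsler–Minkowski norm on $\mathbb R^N$ ($H(\xi)=0$ iff $\xi=0$, $H\in C^\infty(\mathbb R^N\setminus\{0\})$, $H(t\xi)=|t|H(\xi)$, Hessian of $H^2/2$ positive definite off $0$). (H1): $\lambda>0$, $0<\delta<1$, $2\le p<q<N$, $q<\alpha+1\le p^*:=\frac{Np}{N-p}$, $\frac qp<1+\frac1N$, $0\le\mu\in C^{0,1}(\overline\Omega)$. (H3): $a>0$ a.e., $a\in L^{p^*/(p^*-1+\delta)}(\Omega)$. (H4): $b\in L^\infty(\Omega)$, possibly sign-changing, $b^+\not\equiv0$. $W_0^{1,\mathcal H}(\Omega)$ is the completion of $C_c^\infty(\Omega)$ in $\{u\in L^{\mathcal H}:H(\nabla u)\in L^{\mathcal H}\}$, $\mathcal H(x,t)=t^p+\mu(x)t^q$, with norm $\|u\|=\|H(\nabla u)\|_{\mathcal H}$ (Luxemburg norm). $I_\lambda(u)=\int_\Omega\big(\frac{H(\nabla u)^p}{p}+\mu\frac{H(\nabla u)^q}{q}\big)dx-\frac1{1-\delta}\int_\Omega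 a|u|^{1-\delta}dx-\frac{\lambda}{p^*}\int_\Omega b|u|^{p^*}dx$; $\phi_u(t)=I_\lambda(tu)$. $M_\lambda=\{u\ne0:\phi_u'(1)=0\}$, $M_\lambda^\pm=\{u\in M_\lambda:\pm\phi_u''(1)>0\}$, where $\phi_u'(1)=\int_\Omega(H(\nabla u)^p+\mu H(\nabla u)^q)-\int_\Omega a|u|^{1-\delta}-\lambda\int_\Omega b|u|^{p^*}$ and $\phi_u''(1)=\int_\Omega((p-1)H(\nabla u)^p+(q-1)\mu H(\nabla u)^q)+\delta\int_\Omega a|u|^{1-\delta}-\lambda(p^*-1)\int_\Omega b|u|^{p^*}$. *)

theory Defs
  imports "HOL-Analysis.Analysis"
begin

definition partial :: "'n::finite \<Rightarrow> (real^'n \<Rightarrow> real) \<Rightarrow> real^'n \<Rightarrow> real" where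
  "partial i f x = deriv (\<lambda>t. f (x + t *\<^sub>R axis i 1)) 0"

fun iter_partial :: "'n::finite list \<Rightarrow> (real^'n \<Rightarrow> real) \<Rightarrow> real^'n \<Rightarrow> real" where
  "iter_partial [] f = f"
| "iter_partial (i # is) f = partial i (iter_partial is f)"

definition C_inf_on :: "(real^'n::finite) set \<Rightarrow> (real^'n \<Rightarrow> real) \<Rightarrow> bool" where
  "C_inf_on S f \<longleftrightarrow> (\<forall>is. iter_partial is f differentiable_on S)"

definition grad :: "(real^'n::finite \<Rightarrow> real) \<Rightarrow> real^'n \<Rightarrow> real^'n" where
  "grad f x = (\<chi> i. partial i f x)"

definition Cc_inf :: "(real^'n::finite) set \<Rightarrow> (real^'n \<Rightarrow> real) set" where
  "Cc_inf \<Omega> = {\<phi>. C_inf_on UNIV \<phi> \<and> compact (closure {x. \<phi> x \<noteq> 0})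
                     \<and> closure {x. \<phi> x \<noteq> 0} \<subseteq> \<Omega>}"

definition finsler_minkowski_norm :: "(real^'n::finite \<Rightarrow> real) \<Rightarrow> bool" where
  "finsler_minkowski_norm H \<longleftrightarrow>
     (\<forall>\<xi>. H \<xi> = 0 \<longleftrightarrow> \<xi> = 0)
   \<and> C_inf_on (UNIV - {0}) H
   \<and> (\<forall>t \<xi>. H (t *\<^sub>R \<xi>) = \<bar>t\<bar> * H \<xi>)
   \<and> (\<forall>\<xi> v. \<xi> \<noteq> 0 \<longrightarrow> v \<noteq> 0 \<longrightarrow>
        (\<Sum>i\<in>UNIV. \<Sum>j\<in>UNIV. partial i (partial j (\<lambda>\<zeta>. (H \<zeta>)\<^sup>2 / 2)) \<xi> * v$i * v$j) > 0)"

definition lipschitz_domain :: "(real^'n::finite) set \<Rightarrow> bool" where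
  "lipschitz_domain \<Omega> \<longleftrightarrow> open \<Omega> \<and> connected \<Omega> \<and> \<Omega> \<noteq> {} \<and>
     (\<forall>x0\<in>frontier \<Omega>. \<exists>r>0. \<exists>T k (g::real^'n \<Rightarrow> real) L.
        orthogonal_transformation T \<and> L-lipschitz_on UNIV g \<and>
        (\<forall>y z. (\<forall>i. i \<noteq> k \<longrightarrow> y$i = z$i) \<longrightarrow> g y = g z) \<and>
        \<Omega> \<inter> ball x0 r = {x \<in> ball x0 r. (T (x - x0))$k < g (T (x - x0))})"

definition sobolev_conj :: "real \<Rightarrow> real \<Rightarrow> real" where
  "sobolev_conj N p = N * p / (N - p)"

definition musielak :: "(real^'n::finite \<Rightarrow> real) \<Rightarrow> real \<Rightarrow> real \<Rightarrow> real^'n \<Rightarrow> real \<Rightarrow> real" where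
  "musielak \<mu> p q x t = t powr p + \<mu> x * t powr q"

text \<open>Luxemburg norm (value in ennreal; infinity if f is not in L^H).\<close>
definition lux_norm :: "(real^'n::finite) set \<Rightarrow> (real^'n \<Rightarrow> real) \<Rightarrow> real \<Rightarrow> real \<Rightarrow> (real^'n \<Rightarrow> real) \<Rightarrow> ennreal" where
  "lux_norm \<Omega> \<mu> p q f = Inf {ennreal \<tau> | \<tau>. \<tau> > 0 \<and>
      (\<integral>\<^sup>+ x. ennreal (musielak \<mu> p q x (\<bar>f x\<bar> / \<tau>)) * indicator \<Omega> x \<partial>lebesgue) \<le> 1}"

text \<open>Elements of W_0^{1,H}(Omega), represented as pairs (u, G) where G is the gradient of u
  (the limit of the gradients of an approximating sequence of test functions).\<close>
definition W0 :: "(real^'n::finite) set \<Rightarrow> (real^'n \<Rightarrow> real) \<Rightarrow> (real^'n \<Rightarrow> real) \<Rightarrow> real \<Rightarrow> real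
                   \<Rightarrow> ((real^'n \<Rightarrow> real) \<times> (real^'n \<Rightarrow> real^'n)) set" where
  "W0 \<Omega> H \<mu> p q = {(u, G). u \<in> borel_measurable lebesgue \<and> G \<in> borel_measurable lebesgue \<and>
      (\<exists>\<phi>. (\<forall>k. \<phi> k \<in> Cc_inf \<Omega>) \<and>
           (\<lambda>k. lux_norm \<Omega> \<mu> p q (\<lambda>x. \<phi> k x - u x)) \<longlonglongrightarrow> 0 \<and>
           (\<lambda>k. lux_norm \<Omega> \<mu> p q (\<lambda>x. H (grad (\<phi> k) x - G x))) \<longlonglongrightarrow> 0)}"

definition dphi1 :: "(real^'n::finite) set \<Rightarrow> (real^'n \<Rightarrow> real) \<Rightarrow> (real^'n \<Rightarrow> real) \<Rightarrow> (real^'n \<Rightarrow> real)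
     \<Rightarrow> (real^'n \<Rightarrow> real) \<Rightarrow> real \<Rightarrow> real \<Rightarrow> real \<Rightarrow> real
     \<Rightarrow> (real^'n \<Rightarrow> real) \<times> (real^'n \<Rightarrow> real^'n) \<Rightarrow> real" where
  "dphi1 \<Omega> H \<mu> a b p q \<delta> lam uG = (case uG of (u, G) \<Rightarrow>
     (let ps = sobolev_conj (real CARD('n)) p in
      integral\<^sup>L (lebesgue_on \<Omega>) (\<lambda>x. H (G x) powr p + \<mu> x * H (G x) powr q)
      - integral\<^sup>L (lebesgue_on \<Omega>) (\<lambda>x. a x * \<bar>u x\<bar> powr (1 - \<delta>))
      - lam * integral\<^sup>L (lebesgue_on \<Omega>) (\<lambda>x. b x * \<bar>u x\<bar> powr ps)))"

definition ddphi1 :: "(real^'n::finite) set \<Rightarrow> (real^'n \<Rightarrow> real) \<Rightarrow> (real^'n \<Rightarrow> real) \<Rightarrow> (real^'n \<Rightarrow> real)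
     \<Rightarrow> (real^'n \<Rightarrow> real) \<Rightarrow> real \<Rightarrow> real \<Rightarrow> real \<Rightarrow> real
     \<Rightarrow> (real^'n \<Rightarrow> real) \<times> (real^'n \<Rightarrow> real^'n) \<Rightarrow> real" where
  "ddphi1 \<Omega> H \<mu> a b p q \<delta> lam uG = (case uG of (u, G) \<Rightarrow>
     (let ps = sobolev_conj (real CARD('n)) p in
      integral\<^sup>L (lebesgue_on \<Omega>) (\<lambda>x. (p - 1) * H (G x) powr p + (q - 1) * \<mu> x * H (G x) powr q)
      + \<delta> * integral\<^sup>L (lebesgue_on \<Omega>) (\<lambda>x. a x * \<bar>u x\<bar> powr (1 - \<delta>))
      - lam * (ps - 1) * integral\<^sup>L (lebesgue_on \<Omega>) (\<lambda>x. b x * \<bar>u x\<bar> powr ps)))"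

definition nehari :: "(real^'n::finite) set \<Rightarrow> (real^'n \<Rightarrow> real) \<Rightarrow> (real^'n \<Rightarrow> real) \<Rightarrow> (real^'n \<Rightarrow> real)
     \<Rightarrow> (real^'n \<Rightarrow> real) \<Rightarrow> real \<Rightarrow> real \<Rightarrow> real \<Rightarrow> real
     \<Rightarrow> ((real^'n \<Rightarrow> real) \<times> (real^'n \<Rightarrow> real^'n)) set" where
  "nehari \<Omega> H \<mu> a b p q \<delta> lam = {(u, G) \<in> W0 \<Omega> H \<mu> p q.
      \<not> (AE x in lebesgue_on \<Omega>. u x = 0) \<and> dphi1 \<Omega> H \<mu> a b p q \<delta> lam (u, G) = 0}"

definition nehari_plus where
  "nehari_plus \<Omega> H \<mu> a b p q \<delta> lam =
     {uG \<in> nehari \<Omega> H \<mu> a b p q \<delta> lam. ddphi1 \<Omega> H \<mu> a b p q \<delta> lam uG > 0}"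

definition nehari_minus where
  "nehari_minus \<Omega> H \<mu> a b p q \<delta> lam =
     {uG \<in> nehari \<Omega> H \<mu> a b p q \<delta> lam. ddphi1 \<Omega> H \<mu> a b p q \<delta> lam uG < 0}"

end

theory Submission
  imports Defs
begin

definition epow :: "ennreal \<Rightarrow> real \<Rightarrow> ennreal" where
  "epow x r = (if x = top then top else ennreal (enn2real x powr r))"

lemma epow_ennreal: "0 \<le> a \<Longrightarrow> epow (ennreal a) r = ennreal (a powr r)"
  by (simp add: epow_def)

lemma epow_top[simp]: "epow top r = top"
  by (simp add: epow_def)

lemma epow_0[simp]: "epow 0 r = 0"
  by (simp add: epow_def)

lemma epow_eq_top_iff: "epow x r = top \<longleftrightarrow> x = top"
  by (simp add: epow_def)

lemma epow_eq_0_iff: "epow x r = 0 \<longleftrightarrow> x = 0"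
  by (cases x) (auto simp: epow_def)

lemma epow_1[simp]: "epow x 1 = x"
  by (cases x) (auto simp: epow_def)

lemma epow_one[simp]: "epow 1 r = 1"
  by (simp add: epow_def)

lemma epow_mult: "r > 0 \<Longrightarrow> epow (x * y) r = epow x r * epow y r"
proof (cases x; cases y)
  fix a b assume r: "r > 0" and x: "x = ennreal a" "0 \<le> a" and y: "y = ennreal b" "0 \<le> b"
  then show ?thesis
  proof -
    have "x * y = ennreal (a * b)" using x y by (simp add: ennreal_mult)
    then have "epow (x * y) r = ennreal ((a * b) powr r)" using x y by (simp add: epow_ennreal)
    also have "\<dots> = ennreal (a powr r) * ennreal (b powr r)"
      using x y by (simp add: powr_mult ennreal_mult)
    finally show ?thesis using x y by (simp add: epow_ennreal)
  qed
next
  fix a assume r: "r > 0" and x: "x = ennreal a" "0 \<le> a" and y: "y = top"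
  then show ?thesis
    by (cases "a = 0") (auto simp: epow_def ennreal_mult_top ennreal_top_mult)
next
  fix b assume r: "r > 0" and x: "x = top" and y: "y = ennreal b" "0 \<le> b"
  then show ?thesis
    by (cases "b = 0") (auto simp: epow_def ennreal_mult_top ennreal_top_mult)
next
  assume "x = top" "y = top" then show ?thesis by (simp add: epow_def)
qed

lemma epow_epow: "r > 0 \<Longrightarrow> epow (epow x r) s = epow x (r * s)"
  by (cases x) (auto simp: epow_def powr_powr)

lemma epow_add: "r > 0 \<Longrightarrow> s > 0 \<Longrightarrow> epow x r * epow x s = epow x (r + s)"
  by (cases x) (auto simp: epow_def powr_add ennreal_mult'[symmetric])

lemma epow_mono: "r > 0 \<Longrightarrow> x \<le> y \<Longrightarrow> epow x r \<le> epow y r"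
  by (cases x; cases y) (auto simp: epow_def powr_mono2 ennreal_leI top_unique)

lemma epow_prod: "r > 0 \<Longrightarrow> epow (\<Prod>i\<in>I. f i) r = (\<Prod>i\<in>I. epow (f i) r)"
  by (induction I rule: infinite_finite_induct) (simp_all add: epow_mult epow_one)

lemma measurable_epow[measurable]:
  "f \<in> borel_measurable M \<Longrightarrow> (\<lambda>x. epow (f x) r) \<in> borel_measurable M"
proof -
  assume f: "f \<in> borel_measurable M"
  have s: "{x \<in> space M. f x = top} \<in> sets M"
    using measurable_sets[OF f, of "{top}"] by (simp add: vimage_def Int_def conj_commute)
  show ?thesis unfolding epow_def
    by (rule measurable_If[OF measurable_const _ s]) (use f in measurable)
qed

lemma epow_gt_0_iff: "epow x r > 0 \<longleftrightarrow> x > 0"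
  using epow_eq_0_iff[of x r] by (simp add: zero_less_iff_neq_zero)

lemma epow_amgm:
  assumes "0 < \<alpha>" "\<alpha> < 1"
  shows "epow a \<alpha> * epow b (1 - \<alpha>) \<le> ennreal \<alpha> * a + ennreal (1 - \<alpha>) * b"
proof (cases "a = 0 \<or> b = 0")
  case True then show ?thesis by auto
next
  case False
  then have a0: "a \<noteq> 0" and b0: "b \<noteq> 0" by auto
  show ?thesis
  proof (cases "a = top \<or> b = top")
    case True
    then have "ennreal \<alpha> * a + ennreal (1 - \<alpha>) * b = top"
      using assms a0 b0 by (auto simp: ennreal_mult_top)
    then show ?thesis by (metis top_greatest)
  next
    case False
    then obtain x y where x: "a = ennreal x" "0 < x" and y: "b = ennreal y" "0 < y"
      using a0 b0 by (cases a; cases b) auto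
    have "x powr \<alpha> * y powr (1 - \<alpha>) \<le> \<alpha> * x + (1 - \<alpha>) * y"
      using Youngs_inequality_0[of \<alpha> "1 - \<alpha>" x y] assms x y by auto
    then have "ennreal (x powr \<alpha> * y powr (1 - \<alpha>)) \<le> ennreal (\<alpha> * x + (1 - \<alpha>) * y)"
      by (rule ennreal_leI)
    then show ?thesis using x y assms
      by (simp add: epow_ennreal ennreal_mult ennreal_plus[symmetric])
  qed
qed

lemma holder_ennreal:
  assumes f[measurable]: "f \<in> borel_measurable M" and g[measurable]: "g \<in> borel_measurable M"
    and al: "0 < \<alpha>" "\<alpha> < 1"
  shows "(\<integral>\<^sup>+x. epow (f x) \<alpha> * epow (g x) (1 - \<alpha>) \<partial>M)
          \<le> epow (\<integral>\<^sup>+x. f x \<partial>M) \<alpha> * epow (\<integral>\<^sup>+x. g x \<partial>M) (1 - \<alpha>)"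
proof -
  define A where "A = (\<integral>\<^sup>+x. f x \<partial>M)"
  define B where "B = (\<integral>\<^sup>+x. g x \<partial>M)"
  show ?thesis
  proof (cases "A = 0 \<or> B = 0")
    case True
    then have "AE x in M. f x = 0 \<or> g x = 0"
      using nn_integral_0_iff_AE[OF f] nn_integral_0_iff_AE[OF g] unfolding A_def B_def
      by (auto elim: AE_mp)
    then have "(\<integral>\<^sup>+x. epow (f x) \<alpha> * epow (g x) (1 - \<alpha>) \<partial>M) = (\<integral>\<^sup>+x. 0 \<partial>M)"
      by (intro nn_integral_cong_AE) auto
    then show ?thesis by simp
  next
    case False
    then have A0: "A \<noteq> 0" and B0: "B \<noteq> 0" by auto
    show ?thesis
    proof (cases "A = top \<or> B = top")
      case True
      then have "epow A \<alpha> * epow B (1 - \<alpha>) = top"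
        using A0 B0 by (auto simp: epow_eq_top_iff epow_eq_0_iff ennreal_mult_eq_top_iff)
      then show ?thesis unfolding A_def B_def by simp
    next
      case False
      then obtain a b where a: "A = ennreal a" "0 < a" and b: "B = ennreal b" "0 < b"
        using A0 B0 by (cases A; cases B) auto
      define C where "C = epow A \<alpha> * epow B (1 - \<alpha>)"
      have pt: "epow (f x) \<alpha> * epow (g x) (1 - \<alpha>) \<le>
          C * (ennreal \<alpha> * (f x * ennreal (1/a)) + ennreal (1 - \<alpha>) * (g x * ennreal (1/b)))" for x
      proof -
        have e1: "epow (f x) \<alpha> = epow A \<alpha> * epow (f x * ennreal (1/a)) \<alpha>"
        proof -
          have aa: "ennreal a * ennreal (1/a) = 1" using a by (simp flip: ennreal_mult)
          have "f x = A * (f x * ennreal (1/a))"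
            by (metis aa a(1) mult.assoc mult.commute mult.right_neutral)
          then have "epow (f x) \<alpha> = epow (A * (f x * ennreal (1/a))) \<alpha>" by simp
          then show ?thesis using al by (simp add: epow_mult)
        qed
        have e2: "epow (g x) (1 - \<alpha>) = epow B (1 - \<alpha>) * epow (g x * ennreal (1/b)) (1 - \<alpha>)"
        proof -
          have aa: "ennreal b * ennreal (1/b) = 1" using b by (simp flip: ennreal_mult)
          have "g x = B * (g x * ennreal (1/b))"
            by (metis aa b(1) mult.assoc mult.commute mult.right_neutral)
          then have "epow (g x) (1 - \<alpha>) = epow (B * (g x * ennreal (1/b))) (1 - \<alpha>)" by simp
          then show ?thesis using al by (simp add: epow_mult)
        qed
        have "epow (f x) \<alpha> * epow (g x) (1 - \<alpha>) =
              C * (epow (f x * ennreal (1/a)) \<alpha> * epow (g x * ennreal (1/b)) (1 - \<alpha>))"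
          unfolding e1 e2 C_def by (simp add: ac_simps)
        also have "\<dots> \<le> C * (ennreal \<alpha> * (f x * ennreal (1/a)) + ennreal (1 - \<alpha>) * (g x * ennreal (1/b)))"
          by (intro mult_left_mono epow_amgm al) auto
        finally show ?thesis .
      qed
      have "(\<integral>\<^sup>+x. epow (f x) \<alpha> * epow (g x) (1 - \<alpha>) \<partial>M) \<le>
          (\<integral>\<^sup>+x. C * (ennreal \<alpha> * (f x * ennreal (1/a)) + ennreal (1 - \<alpha>) * (g x * ennreal (1/b))) \<partial>M)"
        by (intro nn_integral_mono pt)
      also have "\<dots> = C * (ennreal \<alpha> * (A * ennreal (1/a)) + ennreal (1 - \<alpha>) * (B * ennreal (1/b)))"
        unfolding A_def B_def
        by (simp add: nn_integral_cmult nn_integral_add nn_integral_multc)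
      also have "\<dots> = C"
        using a b al by (simp add: ennreal_mult[symmetric] ennreal_plus[symmetric] flip: ennreal_mult')
      finally show ?thesis unfolding C_def A_def B_def .
    qed
  qed
qed

lemma holder_prod:
  assumes "finite I" "I \<noteq> {}" "\<And>i. i \<in> I \<Longrightarrow> f i \<in> borel_measurable M"
  shows "(\<integral>\<^sup>+x. (\<Prod>i\<in>I. epow (f i x) (1 / card I)) \<partial>M) \<le> (\<Prod>i\<in>I. epow (\<integral>\<^sup>+x. f i x \<partial>M) (1 / card I))"
  using assms
proof (induction I rule: finite_ne_induct)
  case (singleton j)
  then show ?case by simp
next
  case (insert j I)
  define m where "m = card I"
  have m1: "m \<ge> 1" using insert by (simp add: m_def Suc_le_eq card_gt_0_iff)
  have cI: "card (insert j I) = m + 1" using insert by (simp add: m_def)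
  define F where "F x = (\<Prod>i\<in>I. epow (f i x) (1 / m))" for x
  have Fm: "F \<in> borel_measurable M" unfolding F_def
    using insert.prems by (intro borel_measurable_prod_ennreal measurable_epow) auto
  have fj: "f j \<in> borel_measurable M" using insert.prems by auto
  define al where "al = 1 / (real m + 1)"
  have al: "0 < al" "al < 1" using m1 by (auto simp: al_def)
  have 1: "1 - al = real m / (real m + 1)" using m1 by (simp add: al_def field_simps)
  have ex: "(1 / real m) * (real m / (real m + 1)) = 1 / (real m + 1)" using m1 by (simp add: field_simps)
  have pt: "(\<Prod>i\<in>insert j I. epow (f i x) (1 / card (insert j I))) = epow (f j x) al * epow (F x) (1 - al)" for x
  proof -
    have "epow (F x) (1 - al) = (\<Prod>i\<in>I. epow (epow (f i x) (1 / m)) (1 - al))"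
      unfolding F_def using al by (simp add: epow_prod)
    also have "\<dots> = (\<Prod>i\<in>I. epow (f i x) (1 / (real m + 1)))"
      using m1 by (simp add: 1 epow_epow ex)
    finally show ?thesis using insert.hyps cI by (simp add: al_def add.commute)
  qed
  have "(\<integral>\<^sup>+x. (\<Prod>i\<in>insert j I. epow (f i x) (1 / card (insert j I))) \<partial>M)
      = (\<integral>\<^sup>+x. epow (f j x) al * epow (F x) (1 - al) \<partial>M)" by (simp add: pt)
  also have "\<dots> \<le> epow (\<integral>\<^sup>+x. f j x \<partial>M) al * epow (\<integral>\<^sup>+x. F x \<partial>M) (1 - al)"
    by (rule holder_ennreal[OF fj Fm al])
  also have "\<dots> \<le> epow (\<integral>\<^sup>+x. f j x \<partial>M) al * epow (\<Prod>i\<in>I. epow (\<integral>\<^sup>+x. f i x \<partial>M) (1 / m)) (1 - al)"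
    using insert.IH[OF ] insert.prems al unfolding F_def m_def
    by (intro mult_left_mono epow_mono) auto
  also have "\<dots> = (\<Prod>i\<in>insert j I. epow (\<integral>\<^sup>+x. f i x \<partial>M) (1 / card (insert j I)))"
  proof -
    have "epow (\<Prod>i\<in>I. epow (\<integral>\<^sup>+x. f i x \<partial>M) (1 / m)) (1 - al)
        = (\<Prod>i\<in>I. epow (epow (\<integral>\<^sup>+x. f i x \<partial>M) (1 / m)) (1 - al))"
      using al by (simp add: epow_prod)
    also have "\<dots> = (\<Prod>i\<in>I. epow (\<integral>\<^sup>+x. f i x \<partial>M) (1 / (real m + 1)))"
      using m1 by (simp add: 1 epow_epow ex)
    finally show ?thesis using insert.hyps cI by (simp add: al_def add.commute)
  qed
  finally show ?case .
qed

abbreviation PL :: "'i set \<Rightarrow> ('i \<Rightarrow> real) measure" where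
  "PL J \<equiv> PiM J (\<lambda>_. (lborel::real measure))"

lemma meas_restrict_dep:
  assumes "g \<in> borel_measurable (PL J)" "\<And>x. g x = g (restrict x J)" "J \<subseteq> L"
  shows "g \<in> borel_measurable (PL L)"
proof -
  have "(\<lambda>x. g (restrict x J)) \<in> borel_measurable (PL L)"
    using measurable_comp[OF measurable_restrict_subset[OF assms(3)] assms(1)] by (simp add: comp_def)
  then show ?thesis using assms(2) by simp
qed

lemma hfun_props:
  assumes J: "finite J" "j \<notin> J"
    and g: "g \<in> borel_measurable (PL (insert j J))" "\<And>x. g x = g (restrict x (insert j J))"
  shows "(\<lambda>x. \<integral>\<^sup>+t. g (x(j := t)) \<partial>lborel) \<in> borel_measurable (PL J)"
    and "\<And>x. (\<integral>\<^sup>+t. g (x(j := t)) \<partial>lborel) = (\<integral>\<^sup>+t. g ((restrict x J)(j := t)) \<partial>lborel)"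
    and "(\<integral>\<^sup>+x. (\<integral>\<^sup>+t. g (x(j := t)) \<partial>lborel) \<partial>PL J) = (\<integral>\<^sup>+x. g x \<partial>PL (insert j J))"
proof -
  interpret product_sigma_finite "\<lambda>_. (lborel::real measure)" by standard
  have m: "(\<lambda>(x, t). g (x(j := t))) \<in> borel_measurable (PL J \<Otimes>\<^sub>M lborel)"
    using measurable_comp[OF measurable_add_dim[of j J "\<lambda>_. lborel"] g(1)] by (simp add: comp_def case_prod_beta')
  show "(\<lambda>x. \<integral>\<^sup>+t. g (x(j := t)) \<partial>lborel) \<in> borel_measurable (PL J)"
    using lborel.borel_measurable_nn_integral[of "\<lambda>x t. g (x(j := t))" "PL J"] m by simp
  show "(\<integral>\<^sup>+t. g (x(j := t)) \<partial>lborel) = (\<integral>\<^sup>+t. g ((restrict x J)(j := t)) \<partial>lborel)" for x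
  proof -
    have "restrict (x(j := t)) (insert j J) = restrict ((restrict x J)(j := t)) (insert j J)" for t
      by (auto simp: restrict_def fun_eq_iff)
    then have "g (x(j := t)) = g ((restrict x J)(j := t))" for t using g(2) by metis
    then show ?thesis by simp
  qed
  show "(\<integral>\<^sup>+x. (\<integral>\<^sup>+t. g (x(j := t)) \<partial>lborel) \<partial>PL J) = (\<integral>\<^sup>+x. g x \<partial>PL (insert j J))"
    using product_nn_integral_insert[OF J g(1)] by simp
qed

lemma loomis_whitney:
  fixes g :: "'i \<Rightarrow> ('i \<Rightarrow> real) \<Rightarrow> ennreal"
  assumes "finite I" "2 \<le> card I"
    "\<And>i. i \<in> I \<Longrightarrow> g i \<in> borel_measurable (PL (I - {i}))"
    "\<And>i x. i \<in> I \<Longrightarrow> g i x = g i (restrict x (I - {i}))"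
  shows "(\<integral>\<^sup>+x. (\<Prod>i\<in>I. epow (g i x) (1 / (real (card I) - 1))) \<partial>PL I)
          \<le> (\<Prod>i\<in>I. epow (\<integral>\<^sup>+x. g i x \<partial>PL (I - {i})) (1 / (real (card I) - 1)))"
  using assms
proof (induction I arbitrary: g rule: finite_induct)
  case empty
  show ?case using empty.prems(1) by simp
next
  case (insert j I)
  interpret product_sigma_finite "\<lambda>_. (lborel::real measure)" by standard
  define n where "n = card I"
  have cI: "card (insert j I) = n + 1" using insert.hyps by (simp add: n_def)
  have n1: "n \<ge> 1" using insert.prems(1) cI by simp
  have e: "1 / (real (card (insert j I)) - 1) = 1 / real n" using cI by simp
  have gm: "g i \<in> borel_measurable (PL (insert j I))" if "i \<in> insert j I" for i
    using meas_restrict_dep[OF insert.prems(2)[OF that] insert.prems(3)[OF that]] by auto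
  have jI: "j \<in> insert j I" by simp
  have IjI: "insert j I - {j} = I" using insert.hyps by auto
  have gmI: "g j \<in> borel_measurable (PL I)"
    using meas_restrict_dep[OF insert.prems(2)[OF jI] insert.prems(3)[OF jI], of I] by (simp add: IjI)
  define h where "h i x = (\<integral>\<^sup>+t. g i (x(j := t)) \<partial>lborel)" for i x
  have set_eq: "insert j (I - {i}) = insert j I - {i}" if "i \<in> I" for i
    using that insert.hyps by auto
  have hp: "h i \<in> borel_measurable (PL (I - {i})) \<and> (\<forall>x. h i x = h i (restrict x (I - {i}))) \<and>
      (\<integral>\<^sup>+x. h i x \<partial>PL (I - {i})) = (\<integral>\<^sup>+x. g i x \<partial>PL (insert j I - {i}))" if i: "i \<in> I" for i
  proof -
    have gi1: "g i \<in> borel_measurable (PL (insert j (I - {i})))"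
      using insert.prems(2)[of i] i by (simp add: set_eq[OF i])
    have gi2: "g i x = g i (restrict x (insert j (I - {i})))" for x
      unfolding set_eq[OF i] by (rule insert.prems(3)) (use i in simp)
    have fin: "finite (I - {i})" "j \<notin> I - {i}" using insert.hyps by auto
    note H = hfun_props[OF fin gi1 gi2]
    have H3: "(\<integral>\<^sup>+x. (\<integral>\<^sup>+t. g i (x(j := t)) \<partial>lborel) \<partial>PL (I - {i})) = (\<integral>\<^sup>+x. g i x \<partial>PL (insert j I - {i}))"
      using H(3) unfolding set_eq[OF i] .
    show ?thesis unfolding h_def using H(1) H(2) H3 by blast
  qed
  have hpm: "h i \<in> borel_measurable (PL (I - {i}))" if "i \<in> I" for i using hp[OF that] by blast
  have hpd: "h i x = h i (restrict x (I - {i}))" if "i \<in> I" for i x using hp[OF that] by blast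
  have hpi: "(\<integral>\<^sup>+x. h i x \<partial>PL (I - {i})) = (\<integral>\<^sup>+x. g i x \<partial>PL (insert j I - {i}))" if "i \<in> I" for i
    using hp[OF that] by blast
  have gj_upd: "g j (x(j := t)) = g j x" if "x \<in> space (PL I)" for x t
  proof -
    have "g j (x(j := t)) = g j (restrict (x(j := t)) (insert j I - {j}))"
      by (rule insert.prems(3)[OF jI])
    also have "restrict (x(j := t)) (insert j I - {j}) = x"
      using that insert.hyps by (auto simp: space_PiM PiE_def extensional_def restrict_def fun_eq_iff)
    finally show ?thesis .
  qed
  have tm: "(\<lambda>t. g i (x(j := t))) \<in> borel_measurable lborel" if "x \<in> space (PL I)" "i \<in> insert j I" for x i
    using measurable_comp[OF measurable_component_update[OF that(1) insert.hyps(2)] gm[OF that(2)]]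
    by (simp add: comp_def)
  define E where "E = 1 / real n"
  have Phim: "(\<lambda>y. \<Prod>i\<in>insert j I. epow (g i y) E) \<in> borel_measurable (PL (insert j I))"
    using gm by (intro borel_measurable_prod_ennreal measurable_epow) auto
  have step1: "(\<integral>\<^sup>+y. (\<Prod>i\<in>insert j I. epow (g i y) E) \<partial>PL (insert j I))
      = (\<integral>\<^sup>+x. epow (g j x) E * (\<integral>\<^sup>+t. (\<Prod>i\<in>I. epow (g i (x(j := t))) E) \<partial>lborel) \<partial>PL I)"
  proof -
    have "(\<integral>\<^sup>+y. (\<Prod>i\<in>insert j I. epow (g i y) E) \<partial>PL (insert j I))
        = (\<integral>\<^sup>+x. (\<integral>\<^sup>+t. (\<Prod>i\<in>insert j I. epow (g i (x(j := t))) E) \<partial>lborel) \<partial>PL I)"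
      by (rule product_nn_integral_insert[OF insert.hyps Phim])
    also have "\<dots> = (\<integral>\<^sup>+x. epow (g j x) E * (\<integral>\<^sup>+t. (\<Prod>i\<in>I. epow (g i (x(j := t))) E) \<partial>lborel) \<partial>PL I)"
    proof (rule nn_integral_cong)
      fix x assume x: "x \<in> space (PL I)"
      have m: "(\<lambda>t. \<Prod>i\<in>I. epow (g i (x(j := t))) E) \<in> borel_measurable lborel"
        using tm[OF x] by (intro borel_measurable_prod_ennreal measurable_epow) auto
      show "(\<integral>\<^sup>+t. (\<Prod>i\<in>insert j I. epow (g i (x(j := t))) E) \<partial>lborel)
          = epow (g j x) E * (\<integral>\<^sup>+t. (\<Prod>i\<in>I. epow (g i (x(j := t))) E) \<partial>lborel)"
        using insert.hyps gj_upd[OF x] by (simp add: nn_integral_cmult[OF m])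
    qed
    finally show ?thesis .
  qed
  show ?case
  proof (cases "n = 1")
    case True
    then obtain a where I: "I = {a}" using n_def by (auto simp: card_Suc_eq)
    have aj: "a \<noteq> j" using insert.hyps I by auto
    have E1: "E = 1" using True by (simp add: E_def)
    define c where "c = h a (\<lambda>_. undefined)"
    have hc: "h a x = c" for x
    proof -
      have "h a x = h a (restrict x (I - {a}))" using hpd[of a x] I by blast
      also have "restrict x (I - {a}) = (\<lambda>_. undefined)" using I by (auto simp: restrict_def)
      finally show ?thesis by (simp add: c_def)
    qed
    have "(\<integral>\<^sup>+y. (\<Prod>i\<in>insert j I. epow (g i y) E) \<partial>PL (insert j I))
        = (\<integral>\<^sup>+x. g j x * c \<partial>PL I)"
      unfolding step1 using hc by (simp add: E1 I h_def)
    also have "\<dots> = (\<integral>\<^sup>+x. g j x \<partial>PL I) * c"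
      using gmI by (simp add: nn_integral_multc)
    also have "c = (\<integral>\<^sup>+x. h a x \<partial>PL (I - {a}))"
      using I by (simp add: hc PiM_empty nn_integral_count_space_finite)
    also have "\<dots> = (\<integral>\<^sup>+x. g a x \<partial>PL (insert j I - {a}))"
      using hpi[of a] I by simp
    finally show ?thesis
      using I aj insert.hyps by (simp add: e True E_def insert_Diff_if)
  next
    case False
    then have n2: "n \<ge> 2" using n1 by simp
    have cardI: "card I = n" by (simp add: n_def)
    have Ine: "I \<noteq> {}" using n2 cardI by auto
    define K where "K x = (\<Prod>i\<in>I. epow (h i x) (1 / (real n - 1)))" for x
    have hmI: "h i \<in> borel_measurable (PL I)" if "i \<in> I" for i
      by (rule meas_restrict_dep[OF hpm[OF that] hpd[OF that]]) auto
    have Km: "K \<in> borel_measurable (PL I)"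
      unfolding K_def using hmI by (intro borel_measurable_prod_ennreal measurable_epow) auto
    have al: "0 < E" "E < 1" using n2 by (auto simp: E_def)
    have pt: "(\<Prod>i\<in>I. epow (h i x) E) = epow (K x) (1 - E)" for x
    proof -
      have ex: "1 / (real n - 1) * (1 - E) = E" "(1 - E) / (real n - 1) = E" using n2 by (simp_all add: E_def field_simps)
      have "epow (K x) (1 - E) = (\<Prod>i\<in>I. epow (epow (h i x) (1 / (real n - 1))) (1 - E))"
        unfolding K_def using al by (simp add: epow_prod)
      also have "\<dots> = (\<Prod>i\<in>I. epow (h i x) E)"
        using n2 by (simp add: epow_epow ex)
      finally show ?thesis by simp
    qed
    have "(\<integral>\<^sup>+y. (\<Prod>i\<in>insert j I. epow (g i y) E) \<partial>PL (insert j I))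
        \<le> (\<integral>\<^sup>+x. epow (g j x) E * (\<Prod>i\<in>I. epow (h i x) E) \<partial>PL I)"
      unfolding step1
    proof (rule nn_integral_mono)
      fix x assume x: "x \<in> space (PL I)"
      have "(\<integral>\<^sup>+t. (\<Prod>i\<in>I. epow (g i (x(j := t))) E) \<partial>lborel) \<le> (\<Prod>i\<in>I. epow (h i x) E)"
        using holder_prod[of I "\<lambda>i t. g i (x(j := t))" lborel] insert.hyps n2 tm[OF x] Ine
        unfolding h_def E_def cardI by auto
      then show "epow (g j x) E * (\<integral>\<^sup>+t. (\<Prod>i\<in>I. epow (g i (x(j := t))) E) \<partial>lborel)
          \<le> epow (g j x) E * (\<Prod>i\<in>I. epow (h i x) E)"
        by (rule mult_left_mono) auto
    qed
    also have "\<dots> = (\<integral>\<^sup>+x. epow (g j x) E * epow (K x) (1 - E) \<partial>PL I)"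
      by (simp add: pt)
    also have "\<dots> \<le> epow (\<integral>\<^sup>+x. g j x \<partial>PL I) E * epow (\<integral>\<^sup>+x. K x \<partial>PL I) (1 - E)"
      by (rule holder_ennreal[OF gmI Km al])
    also have "\<dots> \<le> epow (\<integral>\<^sup>+x. g j x \<partial>PL I) E *
        epow (\<Prod>i\<in>I. epow (\<integral>\<^sup>+x. h i x \<partial>PL (I - {i})) (1 / (real n - 1))) (1 - E)"
    proof -
      have "(\<integral>\<^sup>+x. K x \<partial>PL I) \<le> (\<Prod>i\<in>I. epow (\<integral>\<^sup>+x. h i x \<partial>PL (I - {i})) (1 / (real n - 1)))"
        unfolding K_def using insert.IH[of h, OF _ hpm hpd] n2 cardI by auto
      then show ?thesis using al by (intro mult_left_mono epow_mono) auto
    qed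
    also have "\<dots> = epow (\<integral>\<^sup>+x. g j x \<partial>PL I) E * (\<Prod>i\<in>I. epow (\<integral>\<^sup>+x. h i x \<partial>PL (I - {i})) E)"
    proof -
      have ex: "1 / (real n - 1) * (1 - E) = E" "(1 - E) / (real n - 1) = E" using n2 by (simp_all add: E_def field_simps)
      show ?thesis using al n2 by (simp add: epow_prod epow_epow ex)
    qed
    also have "\<dots> = (\<Prod>i\<in>insert j I. epow (\<integral>\<^sup>+x. g i x \<partial>PL (insert j I - {i})) E)"
    proof -
      have "I = insert j I - {j}" using insert.hyps by auto
      then have "(\<integral>\<^sup>+x. g j x \<partial>PL I) = (\<integral>\<^sup>+x. g j x \<partial>PL (insert j I - {j}))" by simp
      moreover have "(\<Prod>i\<in>I. epow (\<integral>\<^sup>+x. h i x \<partial>PL (I - {i})) E)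
          = (\<Prod>i\<in>I. epow (\<integral>\<^sup>+x. g i x \<partial>PL (insert j I - {i})) E)"
        using hpi by (intro prod.cong) auto
      ultimately show ?thesis using insert.hyps by simp
    qed
    finally show ?thesis by (simp add: e E_def)
  qed
qed

lemma sum_basis_upd:
  fixes x :: "'a::euclidean_space \<Rightarrow> real"
  assumes b: "b \<in> Basis"
  shows "(\<Sum>c\<in>Basis. (x(b := t)) c *\<^sub>R c) = (\<Sum>c\<in>Basis. x c *\<^sub>R c) + (t - x b) *\<^sub>R b"
proof -
  have "(\<Sum>c\<in>Basis. (x(b := t)) c *\<^sub>R c) = t *\<^sub>R b + (\<Sum>c\<in>Basis - {b}. x c *\<^sub>R c)"
    using b by (simp add: sum.remove[of Basis b])
  moreover have "(\<Sum>c\<in>Basis. x c *\<^sub>R c) = x b *\<^sub>R b + (\<Sum>c\<in>Basis - {b}. x c *\<^sub>R c)"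
    using b by (simp add: sum.remove[of Basis b])
  ultimately show ?thesis by (simp add: algebra_simps)
qed

lemma gns_lw:
  fixes k :: "'a::euclidean_space \<Rightarrow> real" and d :: "'a \<Rightarrow> 'a \<Rightarrow> ennreal"
  assumes N: "DIM('a) \<ge> 2"
    and km: "k \<in> borel_measurable borel"
    and dm: "\<And>b. b \<in> Basis \<Longrightarrow> d b \<in> borel_measurable borel"
    and bound: "\<And>y b. b \<in> Basis \<Longrightarrow> ennreal \<bar>k y\<bar> \<le> (\<integral>\<^sup>+t. d b (y + t *\<^sub>R b) \<partial>lborel)"
  shows "(\<integral>\<^sup>+y. ennreal (\<bar>k y\<bar> powr (DIM('a) / (DIM('a) - 1))) \<partial>lborel)
         \<le> (\<Prod>b\<in>Basis. epow (\<integral>\<^sup>+y. d b y \<partial>lborel) (1 / (real DIM('a) - 1)))"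
proof -
  interpret product_sigma_finite "\<lambda>_. (lborel::real measure)" by standard
  define e :: "('a \<Rightarrow> real) \<Rightarrow> 'a" where "e x = (\<Sum>b\<in>Basis. x b *\<^sub>R b)" for x
  have em: "e \<in> measurable (PL Basis) borel" unfolding e_def by measurable
  have lb: "lborel = distr (PL Basis) borel e" unfolding e_def by (rule lborel_eq)
  have int_tr: "(\<integral>\<^sup>+y. F y \<partial>lborel) = (\<integral>\<^sup>+x. F (e x) \<partial>PL Basis)" if "F \<in> borel_measurable borel" for F :: "'a \<Rightarrow> ennreal"
    by (subst lb) (simp add: nn_integral_distr[OF em] that)
  define E where "E = 1 / (real DIM('a) - 1)"
  define g where "g b x = (\<integral>\<^sup>+t. d b (e (x(b := t))) \<partial>lborel)" for b x
  have BB: "insert b (Basis - {b}) = Basis" if "b \<in> Basis" for b :: 'a using that by auto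
  have edep: "e x = e (restrict x Basis)" for x unfolding e_def by (simp add: restrict_def)
  have gprops: "g b \<in> borel_measurable (PL (Basis - {b})) \<and> (\<forall>x. g b x = g b (restrict x (Basis - {b}))) \<and>
      (\<integral>\<^sup>+x. g b x \<partial>PL (Basis - {b})) = (\<integral>\<^sup>+y. d b y \<partial>lborel)" if b: "b \<in> Basis" for b
  proof -
    have G1: "(\<lambda>x. d b (e x)) \<in> borel_measurable (PL (insert b (Basis - {b})))"
      unfolding BB[OF b] using measurable_comp[OF em dm[OF b]] by (simp add: comp_def)
    have G2: "d b (e x) = d b (e (restrict x (insert b (Basis - {b}))))" for x
      unfolding BB[OF b] using edep[of x] by simp
    have fin: "finite (Basis - {b})" "b \<notin> Basis - {b}" by auto
    note H = hfun_props[OF fin G1 G2]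
    have H3: "(\<integral>\<^sup>+x. g b x \<partial>PL (Basis - {b})) = (\<integral>\<^sup>+y. d b y \<partial>lborel)"
    proof -
      have "(\<integral>\<^sup>+x. g b x \<partial>PL (Basis - {b})) = (\<integral>\<^sup>+x. d b (e x) \<partial>PL Basis)"
        using H(3) unfolding BB[OF b] g_def .
      also have "\<dots> = (\<integral>\<^sup>+y. d b y \<partial>lborel)" using int_tr[OF dm[OF b]] by simp
      finally show ?thesis .
    qed
    show ?thesis using H(1) H(2) H3 unfolding g_def by blast
  qed
  have gm: "g b \<in> borel_measurable (PL Basis)" if "b \<in> Basis" for b
    using meas_restrict_dep[of "g b" "Basis - {b}" Basis] gprops[OF that] by blast
  have ptb: "ennreal \<bar>k (e x)\<bar> \<le> g b x" if b: "b \<in> Basis" for x b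
  proof -
    have m: "(\<lambda>s. d b (e x + s *\<^sub>R b)) \<in> borel_measurable borel"
      using dm[OF b] by measurable
    have "(\<integral>\<^sup>+s. d b (e x + s *\<^sub>R b) \<partial>lborel) = (\<integral>\<^sup>+t. d b (e x + (- x b + 1 * t) *\<^sub>R b) \<partial>lborel)"
      using nn_integral_real_affine[OF m, of 1 "- x b"] by simp
    also have "\<dots> = g b x" unfolding g_def e_def using sum_basis_upd[OF b, of x] by simp
    finally show ?thesis using bound[OF b, of "e x"] by simp
  qed
  have pw: "ennreal (\<bar>k (e x)\<bar> powr (DIM('a) / (DIM('a) - 1))) \<le> (\<Prod>b\<in>Basis. epow (g b x) E)" for x
  proof -
    have E0: "E > 0" using N by (simp add: E_def)
    have "ennreal (\<bar>k (e x)\<bar> powr (DIM('a) / (DIM('a) - 1))) = ennreal ((\<bar>k (e x)\<bar> powr E) ^ DIM('a))"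
    proof -
      have "(\<bar>k (e x)\<bar> powr E) ^ DIM('a) = \<bar>k (e x)\<bar> powr (E * DIM('a))"
      proof (cases "k (e x) = 0")
        case True then show ?thesis using N by simp
      next
        case False
        then have "(\<bar>k (e x)\<bar> powr E) ^ DIM('a) = (\<bar>k (e x)\<bar> powr E) powr DIM('a)"
          by (simp add: powr_realpow)
        then show ?thesis by (simp add: powr_powr)
      qed
      moreover have "E * DIM('a) = DIM('a) / (DIM('a) - 1)" using N by (simp add: E_def)
      ultimately show ?thesis by simp
    qed
    also have "\<dots> = (\<Prod>b\<in>(Basis::'a set). epow (ennreal \<bar>k (e x)\<bar>) E)"
      by (simp add: epow_ennreal ennreal_power)
    also have "\<dots> \<le> (\<Prod>b\<in>Basis. epow (g b x) E)"
      by (rule prod_mono_ennreal) (auto intro: epow_mono[OF E0] ptb)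
    finally show ?thesis .
  qed
  have km2: "(\<lambda>y. ennreal (\<bar>k y\<bar> powr (DIM('a) / (DIM('a) - 1)))) \<in> borel_measurable borel"
    using km by measurable
  have "(\<integral>\<^sup>+y. ennreal (\<bar>k y\<bar> powr (DIM('a) / (DIM('a) - 1))) \<partial>lborel)
      = (\<integral>\<^sup>+x. ennreal (\<bar>k (e x)\<bar> powr (DIM('a) / (DIM('a) - 1))) \<partial>PL Basis)"
    by (rule int_tr[OF km2])
  also have "\<dots> \<le> (\<integral>\<^sup>+x. (\<Prod>b\<in>Basis. epow (g b x) E) \<partial>PL Basis)"
    by (intro nn_integral_mono pw)
  also have "\<dots> \<le> (\<Prod>b\<in>Basis. epow (\<integral>\<^sup>+x. g b x \<partial>PL (Basis - {b})) E)"
    unfolding E_def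
  proof (rule loomis_whitney)
    show "finite (Basis::'a set)" by simp
    show "2 \<le> card (Basis::'a set)" using N by simp
    show "g i \<in> borel_measurable (PL (Basis - {i}))" if "i \<in> Basis" for i using gprops[OF that] by blast
    show "g i x = g i (restrict x (Basis - {i}))" if "i \<in> Basis" for i x using gprops[OF that] by blast
  qed
  also have "\<dots> = (\<Prod>b\<in>Basis. epow (\<integral>\<^sup>+y. d b y \<partial>lborel) E)"
  proof (rule prod.cong)
    show "epow (\<integral>\<^sup>+x. g b x \<partial>PL (Basis - {b})) E = epow (\<integral>\<^sup>+y. d b y \<partial>lborel) E" if "b \<in> Basis" for b
      using gprops[OF that] by simp
  qed simp
  finally show ?thesis by (simp add: E_def)
qed

definition sgnpow :: "real \<Rightarrow> real \<Rightarrow> real" where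
  "sgnpow a z = sgn z * \<bar>z\<bar> powr a"

lemma abs_powr_div: "(z::real) \<noteq> 0 \<Longrightarrow> \<bar>z\<bar> powr g / \<bar>z\<bar> = \<bar>z\<bar> powr (g - 1)"
  by (simp add: powr_diff[of "\<bar>z\<bar>" g 1])

lemma tendsto_abs_powr_0:
  assumes "a > 0"
  shows "((\<lambda>y::real. \<bar>y\<bar> powr a) \<longlongrightarrow> 0) (at 0)"
proof -
  have "((\<lambda>y::real. \<bar>y\<bar>) \<longlongrightarrow> 0) (at 0)"
    using tendsto_rabs[OF tendsto_ident_at[of 0 UNIV]] by simp
  then show ?thesis
    by (rule tendsto_zero_powrI) (use assms in auto)
qed

lemma dpow:
  fixes g :: real
  assumes g: "g > 1"
  shows "((\<lambda>z. \<bar>z\<bar> powr g) has_real_derivative (g * sgnpow (g - 1) z)) (at z)"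
proof (cases "z = 0")
  case True
  have "((\<lambda>y. (\<bar>y\<bar> powr g - \<bar>0\<bar> powr g) / (y - 0)) \<longlongrightarrow> 0) (at (0::real))"
  proof (rule Lim_null_comparison)
    show "\<forall>\<^sub>F x in at 0. norm ((\<bar>x\<bar> powr g - \<bar>0\<bar> powr g) / (x - 0)) \<le> \<bar>x\<bar> powr (g - 1)"
      unfolding eventually_at_filter
      by (auto intro!: always_eventually simp: abs_powr_div abs_divide)
    show "((\<lambda>y::real. \<bar>y\<bar> powr (g - 1)) \<longlongrightarrow> 0) (at 0)"
      using g by (intro tendsto_abs_powr_0) auto
  qed
  then show ?thesis using True
    by (simp add: has_field_derivative_iff sgnpow_def)
next
  case False
  show ?thesis
  proof (cases "z > 0")
    case True
    have ev: "eventually (\<lambda>w. \<bar>w\<bar> powr g = w powr g) (nhds z)"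
      using order_tendstoD(1)[OF filterlim_ident True] by eventually_elim auto
    show ?thesis
      by (subst DERIV_cong_ev[OF refl ev refl])
         (use True in \<open>auto intro!: derivative_eq_intros simp: sgnpow_def\<close>)
  next
    case neg: False
    then have z: "z < 0" using False by simp
    have ev: "eventually (\<lambda>w. \<bar>w\<bar> powr g = (- w) powr g) (nhds z)"
      using order_tendstoD(2)[OF filterlim_ident z] by eventually_elim auto
    have d: "((\<lambda>w. (- w) powr g) has_real_derivative (g * (- z) powr (g - 1) * (-1))) (at z)"
      using z by (auto intro!: derivative_eq_intros)
    show ?thesis
      by (subst DERIV_cong_ev[OF refl ev refl]) (use d z in \<open>simp add: sgnpow_def\<close>)
  qed
qed

lemma continuous_sgnpow:
  assumes a: "a > 0"
  shows "continuous_on UNIV (sgnpow a)"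
proof -
  have "isCont (sgnpow a) z" for z
  proof (cases "z = 0")
    case True
    have "((\<lambda>y. sgnpow a y) \<longlongrightarrow> 0) (at 0)"
    proof (rule Lim_null_comparison)
      show "\<forall>\<^sub>F x in at 0. norm (sgnpow a x) \<le> \<bar>x\<bar> powr a"
        by (auto intro!: always_eventually simp: sgnpow_def abs_mult sgn_if)
      show "((\<lambda>y::real. \<bar>y\<bar> powr a) \<longlongrightarrow> 0) (at 0)" using a by (rule tendsto_abs_powr_0)
    qed
    then show ?thesis using True by (simp add: isCont_def sgnpow_def[abs_def])
  next
    case False
    then show ?thesis unfolding sgnpow_def
      by (auto intro!: continuous_intros)
  qed
  then show ?thesis by (simp add: continuous_at_imp_continuous_on)
qed

lemma one_d_bound:
  fixes f f' :: "real \<Rightarrow> real"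
  assumes d: "\<And>t. (f has_real_derivative f' t) (at t)"
    and c: "continuous_on UNIV f'"
    and z: "\<And>t. t \<le> - R \<Longrightarrow> f t = 0" and R: "R \<ge> 0"
  shows "ennreal \<bar>f 0\<bar> \<le> (\<integral>\<^sup>+t. ennreal \<bar>f' t\<bar> \<partial>lborel)"
proof -
  have "(f' has_integral (f 0 - f (- R))) {- R..0}"
    using R d by (intro fundamental_theorem_of_calculus)
      (auto simp: has_real_derivative_iff_has_vector_derivative[symmetric] intro: has_field_derivative_at_within)
  then have I: "(f' has_integral f 0) {- R..0}" using z[of "- R"] by simp
  have ci: "continuous_on {- R..0} (\<lambda>t. \<bar>f' t\<bar>)"
    using c by (auto intro!: continuous_intros intro: continuous_on_subset)
  have ai: "(\<lambda>t. \<bar>f' t\<bar>) integrable_on {- R..0}"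
    by (rule integrable_continuous_interval[OF ci])
  have "\<bar>f 0\<bar> \<le> integral {- R..0} (\<lambda>t. \<bar>f' t\<bar>)"
    using integral_norm_bound_integral[OF has_integral_integrable[OF I] ai] I
    by (auto simp: integral_unique)
  also have "ennreal (integral {- R..0} (\<lambda>t. \<bar>f' t\<bar>)) = (\<integral>\<^sup>+t. indicator {- R..0} t * \<bar>f' t\<bar> \<partial>lborel)"
    by (rule nn_integral_has_integral_lebesgue[symmetric]) (auto intro: integrable_integral[OF ai])
  finally have "ennreal \<bar>f 0\<bar> \<le> (\<integral>\<^sup>+t. indicator {- R..0} t * \<bar>f' t\<bar> \<partial>lborel)"
    by (simp add: ennreal_leI)
  also have "\<dots> \<le> (\<integral>\<^sup>+t. ennreal \<bar>f' t\<bar> \<partial>lborel)"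
    by (intro nn_integral_mono) (auto simp: indicator_def)
  finally show ?thesis .
qed

definition smooth_c :: "(real^'n::finite \<Rightarrow> real) \<Rightarrow> bool" where
  "smooth_c \<phi> \<longleftrightarrow> (\<forall>x. \<phi> differentiable (at x)) \<and> (\<forall>i. continuous_on UNIV (partial i \<phi>))
     \<and> (\<exists>R. \<forall>x. R \<le> norm x \<longrightarrow> \<phi> x = 0)"

lemma Cc_inf_smooth_c:
  assumes "\<phi> \<in> Cc_inf \<Omega>"
  shows "smooth_c \<phi>"
proof -
  have C: "C_inf_on UNIV \<phi>" and K: "compact (closure {x. \<phi> x \<noteq> 0})"
    using assms by (auto simp: Cc_inf_def)
  have d0: "iter_partial [] \<phi> differentiable_on UNIV" using C unfolding C_inf_on_def by blast
  then have d: "\<phi> differentiable (at x)" for x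
    by (simp add: differentiable_on_eq_differentiable_at)
  have "iter_partial [i] \<phi> differentiable_on UNIV" for i using C by (simp only: C_inf_on_def)
  then have c: "continuous_on UNIV (partial i \<phi>)" for i
    by (simp add: differentiable_imp_continuous_on)
  have "bounded {x. \<phi> x \<noteq> 0}"
    using compact_imp_bounded[OF K] bounded_subset closure_subset by blast
  then obtain B where B: "\<And>x. \<phi> x \<noteq> 0 \<Longrightarrow> norm x \<le> B" by (auto simp: bounded_iff)
  have "\<forall>x. B + 1 \<le> norm x \<longrightarrow> \<phi> x = 0" using B by force
  then show ?thesis using d c unfolding smooth_c_def by blast
qed

lemma line_deriv:
  fixes \<phi> :: "'a::real_normed_vector \<Rightarrow> real"
  assumes d: "\<And>x. \<phi> differentiable (at x)"
  shows "((\<lambda>s. \<phi> (x + s *\<^sub>R v)) has_real_derivative frechet_derivative \<phi> (at (x + t *\<^sub>R v)) v) (at t)"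
proof -
  let ?D = "frechet_derivative \<phi> (at (x + t *\<^sub>R v))"
  have D: "(\<phi> has_derivative ?D) (at (x + t *\<^sub>R v))"
    using d frechet_derivative_works by blast
  have l: "((\<lambda>s. x + s *\<^sub>R v) has_derivative (\<lambda>h. h *\<^sub>R v)) (at t)"
    by (auto intro!: derivative_eq_intros)
  have "((\<lambda>s. \<phi> (x + s *\<^sub>R v)) has_derivative (\<lambda>h. ?D (h *\<^sub>R v))) (at t)"
    using diff_chain_at[OF l D] by (simp add: comp_def)
  moreover have "(\<lambda>h. ?D (h *\<^sub>R v)) = (*) (?D v)"
    using linear_scale[OF has_derivative_linear[OF D]] by (auto simp: fun_eq_iff)
  ultimately show ?thesis unfolding has_field_derivative_def by metis
qed

lemma partial_eq_frechet:
  fixes \<phi> :: "real^'n::finite \<Rightarrow> real"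
  assumes d: "\<And>x. \<phi> differentiable (at x)"
  shows "partial i \<phi> y = frechet_derivative \<phi> (at y) (axis i 1)"
  unfolding partial_def
  using DERIV_imp_deriv[OF line_deriv[OF d, of y "axis i 1" 0]] by simp

lemma partial_line_deriv:
  fixes \<phi> :: "real^'n::finite \<Rightarrow> real"
  assumes d: "\<And>x. \<phi> differentiable (at x)"
  shows "((\<lambda>s. \<phi> (x + s *\<^sub>R axis i 1)) has_real_derivative partial i \<phi> (x + t *\<^sub>R axis i 1)) (at t)"
  using line_deriv[OF d, of x "axis i 1" t] partial_eq_frechet[OF d] by simp

lemma smooth_c_cont:
  "smooth_c \<phi> \<Longrightarrow> continuous_on UNIV \<phi>"
  unfolding smooth_c_def by (meson continuous_at_imp_continuous_on differentiable_imp_continuous_within)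

lemma smooth_c_grad_cont:
  "smooth_c \<phi> \<Longrightarrow> continuous_on UNIV (grad \<phi>)"
  unfolding smooth_c_def grad_def
  by (auto intro!: continuous_on_vec_lambda)

lemma Basis_vec_real: "b \<in> (Basis :: (real^'n::finite) set) \<Longrightarrow> \<exists>i. b = axis i 1"
  by (auto simp: Basis_vec_def)

lemma abs_sgnpow_le: "\<bar>sgnpow a z\<bar> \<le> \<bar>z\<bar> powr a"
  by (auto simp: sgnpow_def abs_mult sgn_if)

lemma line_bound_smooth:
  fixes \<phi> :: "real^'n::finite \<Rightarrow> real"
  assumes sc: "smooth_c \<phi>" and g: "\<gamma> > 1" and b: "b \<in> Basis"
  shows "ennreal \<bar>\<bar>\<phi> y\<bar> powr \<gamma>\<bar> \<le>
    (\<integral>\<^sup>+t. ennreal (\<gamma> * \<bar>\<phi> (y + t *\<^sub>R b)\<bar> powr (\<gamma> - 1) * norm (grad \<phi> (y + t *\<^sub>R b))) \<partial>lborel)"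
proof -
  obtain i where bi: "b = axis i 1" using Basis_vec_real[OF b] by blast
  have d: "\<And>x. \<phi> differentiable (at x)" and ci: "continuous_on UNIV (partial i \<phi>)"
    and "\<exists>R. \<forall>x. R \<le> norm x \<longrightarrow> \<phi> x = 0" using sc unfolding smooth_c_def by blast+
  then obtain R where R: "\<And>x. R \<le> norm x \<Longrightarrow> \<phi> x = 0" by blast
  define f where "f t = \<bar>\<phi> (y + t *\<^sub>R b)\<bar> powr \<gamma>" for t
  define f' where "f' t = \<gamma> * sgnpow (\<gamma> - 1) (\<phi> (y + t *\<^sub>R b)) * partial i \<phi> (y + t *\<^sub>R b)" for t
  have fd: "(f has_real_derivative f' t) (at t)" for t
    unfolding f_def f'_def bi
    using DERIV_chain2[OF dpow[OF g] partial_line_deriv[OF d, of y i t]] by (simp add: mult.assoc)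
  have lc: "continuous_on UNIV (\<lambda>t::real. y + t *\<^sub>R b)" by (intro continuous_intros)
  have c1: "continuous_on UNIV (\<lambda>t. \<phi> (y + t *\<^sub>R b))"
    using continuous_on_compose2[OF smooth_c_cont[OF sc] lc] by simp
  have c2: "continuous_on UNIV (\<lambda>t. partial i \<phi> (y + t *\<^sub>R b))"
    using continuous_on_compose2[OF ci lc] by simp
  have c3: "continuous_on UNIV (\<lambda>t. sgnpow (\<gamma> - 1) (\<phi> (y + t *\<^sub>R b)))"
    using continuous_on_compose2[OF continuous_sgnpow c1] g by simp
  have fc: "continuous_on UNIV f'" unfolding f'_def
    by (intro continuous_intros c2 c3)
  have fz: "f t = 0" if "t \<le> - (\<bar>R\<bar> + norm y)" for t
  proof -
    have "norm (t *\<^sub>R b) \<le> norm (y + t *\<^sub>R b) + norm y"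
      by (metis add_diff_cancel_left' norm_triangle_ineq4 add.commute)
    then have "\<bar>t\<bar> \<le> norm (y + t *\<^sub>R b) + norm y" using bi by simp
    then have "R \<le> norm (y + t *\<^sub>R b)" using that by linarith
    then show ?thesis using R unfolding f_def by simp
  qed
  have "ennreal \<bar>f 0\<bar> \<le> (\<integral>\<^sup>+t. ennreal \<bar>f' t\<bar> \<partial>lborel)"
    by (rule one_d_bound[OF fd fc fz, of "\<bar>R\<bar> + norm y"]) auto
  also have "\<dots> \<le> (\<integral>\<^sup>+t. ennreal (\<gamma> * \<bar>\<phi> (y + t *\<^sub>R b)\<bar> powr (\<gamma> - 1) * norm (grad \<phi> (y + t *\<^sub>R b))) \<partial>lborel)"
  proof (intro nn_integral_mono ennreal_leI)
    fix t
    have "\<bar>partial i \<phi> (y + t *\<^sub>R b)\<bar> \<le> norm (grad \<phi> (y + t *\<^sub>R b))"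
      using component_le_norm_cart[of "grad \<phi> (y + t *\<^sub>R b)" i] by (simp add: grad_def)
    then show "\<bar>f' t\<bar> \<le> \<gamma> * \<bar>\<phi> (y + t *\<^sub>R b)\<bar> powr (\<gamma> - 1) * norm (grad \<phi> (y + t *\<^sub>R b))"
      unfolding f'_def using g abs_sgnpow_le[of "\<gamma> - 1" "\<phi> (y + t *\<^sub>R b)"]
      by (auto simp: abs_mult intro!: mult_mono)
  qed
  finally show ?thesis by (simp add: f_def)
qed

lemma real_alg:
  fixes a b \<gamma> \<alpha> e :: real
  assumes a: "a > 0" and b: "b \<ge> 0" and g: "\<gamma> > 0" and e: "e > 0" and al: "\<alpha> \<ge> 0" "\<alpha> \<le> 1"
    and th: "1 - \<alpha> * e > 0"
    and h: "a \<le> (\<gamma> * a powr \<alpha> * b powr (1 - \<alpha>)) powr e"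
  shows "a \<le> \<gamma> powr (e / (1 - \<alpha> * e)) * b powr ((1 - \<alpha>) * e / (1 - \<alpha> * e))"
proof -
  define \<theta> where "\<theta> = 1 - \<alpha> * e"
  have t0: "\<theta> > 0" using th by (simp add: \<theta>_def)
  have "(\<gamma> * a powr \<alpha> * b powr (1 - \<alpha>)) powr e = \<gamma> powr e * a powr (\<alpha> * e) * b powr ((1 - \<alpha>) * e)"
    using a b g by (simp add: powr_mult powr_powr)
  with h have h2: "a \<le> \<gamma> powr e * a powr (\<alpha> * e) * b powr ((1 - \<alpha>) * e)" by simp
  have ap: "a powr (\<alpha> * e) > 0" using a by simp
  have "a powr \<theta> = a / a powr (\<alpha> * e)"
    using a by (simp add: \<theta>_def powr_diff)
  also have "\<dots> \<le> \<gamma> powr e * b powr ((1 - \<alpha>) * e)"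
    using h2 ap by (simp add: divide_le_eq mult.commute mult.left_commute)
  finally have h3: "a powr \<theta> \<le> \<gamma> powr e * b powr ((1 - \<alpha>) * e)" .
  have "a = (a powr \<theta>) powr (1 / \<theta>)" using a t0 by (simp add: powr_powr)
  also have "\<dots> \<le> (\<gamma> powr e * b powr ((1 - \<alpha>) * e)) powr (1 / \<theta>)"
    using h3 t0 by (intro powr_mono2) auto
  also have "\<dots> = \<gamma> powr (e / \<theta>) * b powr ((1 - \<alpha>) * e / \<theta>)"
    using b g by (simp add: powr_mult powr_powr)
  finally show ?thesis by (simp add: \<theta>_def)
qed

lemma ennreal_alg:
  fixes A B :: ennreal and \<gamma> \<alpha> e :: real
  assumes A: "A \<noteq> top" and g: "\<gamma> > 0" and e: "e > 0" and al: "\<alpha> > 0" "\<alpha> < 1"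
    and th: "1 - \<alpha> * e > 0"
    and h: "A \<le> epow (ennreal \<gamma> * epow A \<alpha> * epow B (1 - \<alpha>)) e"
  shows "A \<le> ennreal (\<gamma> powr (e / (1 - \<alpha> * e))) * epow B ((1 - \<alpha>) * e / (1 - \<alpha> * e))"
proof (cases "B = top")
  case True
  have "ennreal (\<gamma> powr (e / (1 - \<alpha> * e))) * epow B ((1 - \<alpha>) * e / (1 - \<alpha> * e)) = top"
    using True g by (simp add: ennreal_mult_eq_top_iff)
  then show ?thesis by simp
next
  case False
  show ?thesis
  proof (cases "A = 0")
    case True then show ?thesis by simp
  next
    case A0: False
    obtain a where a: "A = ennreal a" "a > 0" using A A0 by (cases A) auto
    obtain b where b: "B = ennreal b" "b \<ge> 0" using False by (cases B) auto
    have "ennreal \<gamma> * epow A \<alpha> * epow B (1 - \<alpha>) = ennreal (\<gamma> * a powr \<alpha> * b powr (1 - \<alpha>))"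
      using a b g by (simp add: epow_ennreal ennreal_mult)
    then have "A \<le> ennreal ((\<gamma> * a powr \<alpha> * b powr (1 - \<alpha>)) powr e)"
      using h a b g by (simp add: epow_ennreal)
    then have "a \<le> (\<gamma> * a powr \<alpha> * b powr (1 - \<alpha>)) powr e"
      using a by (simp add: ennreal_le_iff2)
    then have "a \<le> \<gamma> powr (e / (1 - \<alpha> * e)) * b powr ((1 - \<alpha>) * e / (1 - \<alpha> * e))"
      using real_alg[OF a(2) b(2) g e less_imp_le[OF al(1)] less_imp_le[OF al(2)] th] by blast
    then show ?thesis using a b g by (simp add: epow_ennreal ennreal_mult[symmetric] ennreal_leI)
  qed
qed

lemma epow_pow:
  assumes r: "r > 0" and n: "n \<ge> 1"
  shows "epow x r ^ n = epow x (r * n)"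
  using n
proof (induction n rule: nat_induct_at_least)
  case base then show ?case by simp
next
  case (Suc n)
  then have "epow x r ^ Suc n = epow x r * epow x (r * n)" by simp
  also have "\<dots> = epow x (r + r * n)" using Suc r by (intro epow_add) auto
  finally show ?case by (simp add: algebra_simps)
qed

lemma smooth_c_bounded:
  assumes "smooth_c \<phi>"
  shows "\<exists>M R. M \<ge> 0 \<and> (\<forall>x. \<bar>\<phi> x\<bar> \<le> M) \<and> (\<forall>x. R \<le> norm x \<longrightarrow> \<phi> x = 0)"
proof -
  obtain R where R: "\<And>x. R \<le> norm x \<Longrightarrow> \<phi> x = 0" using assms unfolding smooth_c_def by blast
  have "compact (\<phi> ` cball 0 R)"
    using compact_continuous_image[OF continuous_on_subset[OF smooth_c_cont[OF assms]]] by auto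
  then obtain M where M: "\<And>y. y \<in> \<phi> ` cball 0 R \<Longrightarrow> norm y \<le> M"
    using compact_imp_bounded bounded_iff by metis
  have "\<bar>\<phi> x\<bar> \<le> max M 0" for x
    using M[of "\<phi> x"] R[of x] by (cases "norm x \<le> R") auto
  then show ?thesis using R by (intro exI[of _ "max M 0"] exI[of _ R]) auto
qed

lemma smooth_c_int_finite:
  fixes \<phi> :: "real^'n::finite \<Rightarrow> real"
  assumes "smooth_c \<phi>" "s > 0"
  shows "(\<integral>\<^sup>+y. ennreal (\<bar>\<phi> y\<bar> powr s) \<partial>lborel) < top"
proof -
  obtain M R where M: "M \<ge> 0" "\<And>x. \<bar>\<phi> x\<bar> \<le> M" and R: "\<And>x. R \<le> norm x \<Longrightarrow> \<phi> x = 0"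
    using smooth_c_bounded[OF assms(1)] by blast
  have "(\<integral>\<^sup>+y. ennreal (\<bar>\<phi> y\<bar> powr s) \<partial>lborel) \<le> (\<integral>\<^sup>+y. ennreal (M powr s) * indicator (cball (0::real^'n) R) y \<partial>lborel)"
  proof (rule nn_integral_mono)
    fix y
    show "ennreal (\<bar>\<phi> y\<bar> powr s) \<le> ennreal (M powr s) * indicator (cball 0 R) y"
    proof (cases "norm y \<le> R")
      case True then show ?thesis using M assms(2) by (auto intro!: ennreal_leI powr_mono2 simp: indicator_def)
    next
      case False then show ?thesis using R[of y] by auto
    qed
  qed
  also have "\<dots> = ennreal (M powr s) * emeasure lborel (cball (0::real^'n) R)"
    by (simp add: nn_integral_cmult_indicator)
  also have "\<dots> < top"
    using emeasure_bounded_finite[of "cball (0::real^'n) R"] by (simp add: ennreal_mult_less_top)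
  finally show ?thesis .
qed

lemma exps:
  fixes Nr p :: real
  assumes "2 \<le> Nr" "p < Nr" "1 < p"
  shows "p * (Nr - 1) / (Nr - p) * (Nr / (Nr - 1)) = Nr * p / (Nr - p)"
    and "Nr * p / (Nr - p) * ((p - 1) / p) = p * (Nr - 1) / (Nr - p) - 1"
    and "1 - (p - 1) / p * (Nr / (Nr - 1)) > 0"
    and "(Nr / (Nr - 1)) / (1 - (p - 1) / p * (Nr / (Nr - 1))) = Nr * p / (Nr - p)"
    and "(1 - (p - 1) / p) * (Nr / (Nr - 1)) / (1 - (p - 1) / p * (Nr / (Nr - 1))) = Nr * p / (Nr - p) / p"
    and "p * (Nr - 1) / (Nr - p) > 1"
proof -
  have "(Nr - 1) * (Nr - p) > 0" using assms by simp
  then have nz1: "p + Nr * Nr \<noteq> Nr + Nr * p" by (simp add: algebra_simps)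
  have "p * ((Nr - 1) * (Nr - p)) > 0" using assms by simp
  then have nz2: "p * p + Nr * (Nr * p) \<noteq> Nr * p + Nr * (p * p)" by (simp add: algebra_simps)
  show "p * (Nr - 1) / (Nr - p) * (Nr / (Nr - 1)) = Nr * p / (Nr - p)"
    using assms nz1 by (simp add: field_split_simps)
  show "Nr * p / (Nr - p) * ((p - 1) / p) = p * (Nr - 1) / (Nr - p) - 1"
    using assms by (simp add: field_split_simps)
  show "1 - (p - 1) / p * (Nr / (Nr - 1)) > 0"
    using assms by (simp add: field_split_simps)
  show "(Nr / (Nr - 1)) / (1 - (p - 1) / p * (Nr / (Nr - 1))) = Nr * p / (Nr - p)"
    using assms nz1 by (simp add: field_split_simps)
  show "(1 - (p - 1) / p) * (Nr / (Nr - 1)) / (1 - (p - 1) / p * (Nr / (Nr - 1))) = Nr * p / (Nr - p) / p"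
    using assms nz2 by (simp add: field_split_simps)
  show "p * (Nr - 1) / (Nr - p) > 1"
    using assms by (simp add: field_split_simps)
qed

lemma sobolev_smooth:
  fixes \<phi> :: "real^'n::finite \<Rightarrow> real" and p :: real
  assumes sc: "smooth_c \<phi>" and N: "CARD('n) \<ge> 2" and p: "1 < p" "p < real CARD('n)"
  shows "(\<integral>\<^sup>+y. ennreal (\<bar>\<phi> y\<bar> powr (real CARD('n) * p / (real CARD('n) - p))) \<partial>lborel)
    \<le> ennreal ((p * (real CARD('n) - 1) / (real CARD('n) - p)) powr (real CARD('n) * p / (real CARD('n) - p)))
       * epow (\<integral>\<^sup>+y. ennreal (norm (grad \<phi> y) powr p) \<partial>lborel) ((real CARD('n) * p / (real CARD('n) - p)) / p)"
proof -
  define Nr where "Nr = real CARD('n)"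
  define ps where "ps = Nr * p / (Nr - p)"
  define \<gamma> where "\<gamma> = p * (Nr - 1) / (Nr - p)"
  have N2: "Nr \<ge> 2" using N by (simp add: Nr_def)
  have pN: "p < Nr" using p by (simp add: Nr_def)
  note EX = exps[OF N2 pN p(1)]
  have g1: "\<gamma> > 1" using EX(6) by (simp add: \<gamma>_def)
  have ps0: "ps > 0" using p pN by (simp add: ps_def)
  define D where "D y = ennreal (\<gamma> * \<bar>\<phi> y\<bar> powr (\<gamma> - 1) * norm (grad \<phi> y))" for y
  have phim[measurable]: "\<phi> \<in> borel_measurable borel"
    using smooth_c_cont[OF sc] by (rule borel_measurable_continuous_onI)
  have gradm[measurable]: "grad \<phi> \<in> borel_measurable borel"
    using smooth_c_grad_cont[OF sc] by (rule borel_measurable_continuous_onI)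
  have Dm: "D \<in> borel_measurable borel" unfolding D_def by measurable
  have km: "(\<lambda>y. \<bar>\<phi> y\<bar> powr \<gamma>) \<in> borel_measurable borel" by measurable
  have DIM: "DIM(real^'n) = CARD('n)" by simp
  have LW: "(\<integral>\<^sup>+y. ennreal (\<bar>\<bar>\<phi> y\<bar> powr \<gamma>\<bar> powr (DIM(real^'n) / (DIM(real^'n) - 1))) \<partial>lborel)
         \<le> (\<Prod>b\<in>(Basis::(real^'n) set). epow (\<integral>\<^sup>+y. D y \<partial>lborel) (1 / (real DIM(real^'n) - 1)))"
  proof (rule gns_lw[where k = "\<lambda>y. \<bar>\<phi> y\<bar> powr \<gamma>" and d = "\<lambda>_. D"])
    show "2 \<le> DIM(real^'n)" using N by simp
    show "(\<lambda>y. \<bar>\<phi> y\<bar> powr \<gamma>) \<in> borel_measurable borel" by (rule km)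
    show "D \<in> borel_measurable borel" if "b \<in> Basis" for b :: "real^'n" by (rule Dm)
    show "ennreal \<bar>\<bar>\<phi> y\<bar> powr \<gamma>\<bar> \<le> (\<integral>\<^sup>+t. D (y + t *\<^sub>R b) \<partial>lborel)" if "b \<in> Basis" for y b
      unfolding D_def by (rule line_bound_smooth[OF sc g1 that])
  qed
  have lhs: "\<bar>\<bar>\<phi> y\<bar> powr \<gamma>\<bar> powr (DIM(real^'n) / (DIM(real^'n) - 1)) = \<bar>\<phi> y\<bar> powr ps" for y
  proof -
    have "\<gamma> * (Nr / (Nr - 1)) = ps" using EX(1) by (simp add: \<gamma>_def ps_def)
    then show ?thesis by (simp add: powr_powr Nr_def)
  qed
  have rhs: "(\<Prod>b\<in>(Basis::(real^'n) set). epow X (1 / (real DIM(real^'n) - 1))) = epow X (Nr / (Nr - 1))" for X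
  proof -
    have "(\<Prod>b\<in>(Basis::(real^'n) set). epow X (1 / (real DIM(real^'n) - 1))) = epow X (1 / (Nr - 1)) ^ CARD('n)"
      by (simp add: Nr_def)
    also have "\<dots> = epow X (1 / (Nr - 1) * CARD('n))"
      using N2 N by (intro epow_pow) auto
    finally show ?thesis by (simp add: Nr_def)
  qed
  define A where "A = (\<integral>\<^sup>+y. ennreal (\<bar>\<phi> y\<bar> powr ps) \<partial>lborel)"
  define B where "B = (\<integral>\<^sup>+y. ennreal (norm (grad \<phi> y) powr p) \<partial>lborel)"
  define \<alpha> where "\<alpha> = (p - 1) / p"
  have al: "0 < \<alpha>" "\<alpha> < 1" using p by (auto simp: \<alpha>_def)
  have al1: "1 - \<alpha> = 1 / p" using p by (simp add: \<alpha>_def field_simps)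
  have A1: "A \<le> epow (\<integral>\<^sup>+y. D y \<partial>lborel) (Nr / (Nr - 1))"
    using LW unfolding lhs rhs A_def .
  have Dle: "(\<integral>\<^sup>+y. D y \<partial>lborel) \<le> ennreal \<gamma> * (epow A \<alpha> * epow B (1 - \<alpha>))"
  proof -
    have "D y = ennreal \<gamma> * (epow (ennreal (\<bar>\<phi> y\<bar> powr ps)) \<alpha> * epow (ennreal (norm (grad \<phi> y) powr p)) (1 - \<alpha>))" for y
    proof -
      have "ps * \<alpha> = \<gamma> - 1" using EX(2) by (simp add: ps_def \<alpha>_def \<gamma>_def)
      moreover have "p * (1 - \<alpha>) = 1" using p by (simp add: al1)
      ultimately show ?thesis using g1 unfolding D_def
        by (simp add: epow_ennreal powr_powr ennreal_mult mult.assoc)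
    qed
    then have "(\<integral>\<^sup>+y. D y \<partial>lborel) = ennreal \<gamma> * (\<integral>\<^sup>+y. epow (ennreal (\<bar>\<phi> y\<bar> powr ps)) \<alpha> * epow (ennreal (norm (grad \<phi> y) powr p)) (1 - \<alpha>) \<partial>lborel)"
      by (simp add: nn_integral_cmult)
    also have "\<dots> \<le> ennreal \<gamma> * (epow A \<alpha> * epow B (1 - \<alpha>))"
    proof -
      have m1: "(\<lambda>y. ennreal (\<bar>\<phi> y\<bar> powr ps)) \<in> borel_measurable borel" by measurable
      have m2: "(\<lambda>y. ennreal (norm (grad \<phi> y) powr p)) \<in> borel_measurable borel" by measurable
      show ?thesis
        unfolding A_def B_def by (intro mult_left_mono holder_ennreal al) (auto simp: m1 m2)
    qed
    finally show ?thesis .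
  qed
  have A2: "A \<le> epow (ennreal \<gamma> * epow A \<alpha> * epow B (1 - \<alpha>)) (Nr / (Nr - 1))"
    using A1 epow_mono[OF _ Dle, of "Nr / (Nr - 1)"] N2 by (simp add: mult.assoc)
  have Afin: "A \<noteq> top" using smooth_c_int_finite[OF sc ps0] by (simp add: A_def)
  have th: "1 - \<alpha> * (Nr / (Nr - 1)) > 0" using EX(3) by (simp add: \<alpha>_def)
  have "A \<le> ennreal (\<gamma> powr ((Nr / (Nr - 1)) / (1 - \<alpha> * (Nr / (Nr - 1))))) *
      epow B ((1 - \<alpha>) * (Nr / (Nr - 1)) / (1 - \<alpha> * (Nr / (Nr - 1))))"
    by (rule ennreal_alg[OF Afin _ _ al th A2]) (use g1 N2 in auto)
  moreover have "(Nr / (Nr - 1)) / (1 - \<alpha> * (Nr / (Nr - 1))) = ps"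
    using EX(4) by (simp add: \<alpha>_def ps_def)
  moreover have "(1 - \<alpha>) * (Nr / (Nr - 1)) / (1 - \<alpha> * (Nr / (Nr - 1))) = ps / p"
    using EX(5) by (simp add: \<alpha>_def ps_def)
  ultimately show ?thesis unfolding A_def B_def ps_def \<gamma>_def Nr_def by simp
qed

lemma powr_abs_base: "(x::real) powr a = \<bar>x\<bar> powr a"
  by (cases "x \<ge> 0") (auto simp: uminus_powr_eq[of "-x", simplified, symmetric])

lemma finsler_props:
  fixes H :: "real^'n::finite \<Rightarrow> real"
  assumes F: "finsler_minkowski_norm H"
  shows "continuous_on UNIV H" "\<exists>c>0. \<forall>\<xi>. c * norm \<xi> \<le> \<bar>H \<xi>\<bar>" "\<exists>C>0. \<forall>\<xi>. \<bar>H \<xi>\<bar> \<le> C * norm \<xi>"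
proof -
  have z: "\<And>\<xi>. H \<xi> = 0 \<longleftrightarrow> \<xi> = 0" and hom: "\<And>t \<xi>. H (t *\<^sub>R \<xi>) = \<bar>t\<bar> * H \<xi>"
    and ci: "C_inf_on (UNIV - {0}) H"
    using F unfolding finsler_minkowski_norm_def by blast+
  have "iter_partial [] H differentiable_on (UNIV - {0})" using ci unfolding C_inf_on_def by blast
  then have c0: "continuous_on (UNIV - {0}) H" by (simp add: differentiable_imp_continuous_on)
  define S where "S = sphere (0::real^'n) 1"
  have Ssub: "S \<subseteq> UNIV - {0}" by (auto simp: S_def)
  have cpt: "compact S" by (simp add: S_def)
  have Sne: "S \<noteq> {}" using norm_axis_1[of "undefined::'n"] by (auto simp: S_def)
  have cS: "continuous_on S (\<lambda>x. \<bar>H x\<bar>)"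
    using continuous_on_subset[OF c0 Ssub] by (intro continuous_intros)
  obtain x0 where x0: "x0 \<in> S" "\<And>y. y \<in> S \<Longrightarrow> \<bar>H x0\<bar> \<le> \<bar>H y\<bar>"
    using continuous_attains_inf[OF cpt Sne cS] by blast
  obtain x1 where x1: "x1 \<in> S" "\<And>y. y \<in> S \<Longrightarrow> \<bar>H y\<bar> \<le> \<bar>H x1\<bar>"
    using continuous_attains_sup[OF cpt Sne cS] by blast
  have m0: "\<bar>H x0\<bar> > 0" using x0(1) z[of x0] by (auto simp: S_def)
  have dec: "\<bar>H \<xi>\<bar> = norm \<xi> * \<bar>H (\<xi> /\<^sub>R norm \<xi>)\<bar>" if "\<xi> \<noteq> 0" for \<xi>
  proof -
    have "H \<xi> = H (norm \<xi> *\<^sub>R (\<xi> /\<^sub>R norm \<xi>))" using that by simp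
    also have "\<dots> = norm \<xi> * H (\<xi> /\<^sub>R norm \<xi>)" by (simp add: hom)
    finally show ?thesis by (simp add: abs_mult)
  qed
  have inS: "\<xi> /\<^sub>R norm \<xi> \<in> S" if "\<xi> \<noteq> 0" for \<xi> using that by (simp add: S_def)
  have lower: "\<bar>H x0\<bar> * norm \<xi> \<le> \<bar>H \<xi>\<bar>" for \<xi>
  proof (cases "\<xi> = 0")
    case False then show ?thesis using dec[OF False] x0(2)[OF inS[OF False]]
      by (simp add: mult.commute mult_left_mono)
  qed simp
  have upper: "\<bar>H \<xi>\<bar> \<le> \<bar>H x1\<bar> * norm \<xi>" for \<xi>
  proof (cases "\<xi> = 0")
    case True then show ?thesis using z by simp
  next
    case False then show ?thesis using dec[OF False] x1(2)[OF inS[OF False]]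
      by (simp add: mult.commute mult_left_mono)
  qed
  show "\<exists>c>0. \<forall>\<xi>. c * norm \<xi> \<le> \<bar>H \<xi>\<bar>" using m0 lower by blast
  show "\<exists>C>0. \<forall>\<xi>. \<bar>H \<xi>\<bar> \<le> C * norm \<xi>"
    using upper m0 x1(2)[OF x0(1)] by (intro exI[of _ "\<bar>H x1\<bar>"]) auto
  have "isCont H x" for x
  proof (cases "x = 0")
    case True
    have "(H \<longlongrightarrow> 0) (at 0)"
    proof (rule Lim_null_comparison)
      show "\<forall>\<^sub>F y in at 0. norm (H y) \<le> \<bar>H x1\<bar> * norm y" using upper by (auto intro: always_eventually)
      show "((\<lambda>y. \<bar>H x1\<bar> * norm y) \<longlongrightarrow> 0) (at (0::real^'n))"
        by (auto intro!: tendsto_eq_intros)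
    qed
    moreover have "H 0 = 0" using z by simp
    ultimately show ?thesis using True by (simp add: isCont_def)
  next
    case False
    then show ?thesis using c0 by (simp add: continuous_on_eq_continuous_at open_Diff)
  qed
  then show "continuous_on UNIV H" by (simp add: continuous_at_imp_continuous_on)
qed

lemma lux_small:
  fixes f :: "real^'n::finite \<Rightarrow> real"
  assumes lt: "lux_norm \<Omega> \<mu> p q f < ennreal \<epsilon>"
    and mu: "\<And>x. x \<in> \<Omega> \<Longrightarrow> 0 \<le> \<mu> x"
    and fm: "f \<in> borel_measurable lebesgue"
    and mum: "(\<lambda>x. \<mu> x * indicator \<Omega> x) \<in> borel_measurable lebesgue"
    and Om[measurable]: "\<Omega> \<in> sets lebesgue"
  shows "\<exists>\<tau>. 0 < \<tau> \<and> \<tau> < \<epsilon> \<and>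
    (\<integral>\<^sup>+x. ennreal (\<bar>f x\<bar> powr p) * indicator \<Omega> x \<partial>lebesgue) \<le> ennreal (\<tau> powr p) \<and>
    (\<integral>\<^sup>+x. ennreal (\<mu> x * \<bar>f x\<bar> powr q) * indicator \<Omega> x \<partial>lebesgue) \<le> ennreal (\<tau> powr q)"
proof -
  obtain z where z: "z \<in> {ennreal \<tau> | \<tau>. \<tau> > 0 \<and>
      (\<integral>\<^sup>+ x. ennreal (musielak \<mu> p q x (\<bar>f x\<bar> / \<tau>)) * indicator \<Omega> x \<partial>lebesgue) \<le> 1}" "z < ennreal \<epsilon>"
    using lt unfolding lux_norm_def by (auto simp: Inf_less_iff)
  then obtain \<tau> where t: "z = ennreal \<tau>" "\<tau> > 0"
    and mod: "(\<integral>\<^sup>+ x. ennreal (musielak \<mu> p q x (\<bar>f x\<bar> / \<tau>)) * indicator \<Omega> x \<partial>lebesgue) \<le> 1" by blast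
  have te: "\<tau> < \<epsilon>" using z(2) t by (simp add: ennreal_less_iff)
  define g1 where "g1 x = ennreal ((\<bar>f x\<bar> / \<tau>) powr p) * indicator \<Omega> x" for x
  define g2 where "g2 x = ennreal ((\<mu> x * indicator \<Omega> x) * (\<bar>f x\<bar> / \<tau>) powr q) * indicator \<Omega> x" for x
  have g1m: "g1 \<in> borel_measurable lebesgue" unfolding g1_def using fm by measurable
  have g2m: "g2 \<in> borel_measurable lebesgue" unfolding g2_def using fm mum by measurable
  have le1: "g1 x \<le> ennreal (musielak \<mu> p q x (\<bar>f x\<bar> / \<tau>)) * indicator \<Omega> x" for x
    using mu[of x] by (auto simp: g1_def musielak_def indicator_def intro!: ennreal_leI)
  have le2: "g2 x \<le> ennreal (musielak \<mu> p q x (\<bar>f x\<bar> / \<tau>)) * indicator \<Omega> x" for x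
    using mu[of x] by (auto simp: g2_def musielak_def indicator_def intro!: ennreal_leI)
  have I1: "(\<integral>\<^sup>+x. g1 x \<partial>lebesgue) \<le> 1" using order_trans[OF nn_integral_mono[OF le1] mod] by simp
  have I2: "(\<integral>\<^sup>+x. g2 x \<partial>lebesgue) \<le> 1" using order_trans[OF nn_integral_mono[OF le2] mod] by simp
  have e1: "ennreal (\<bar>f x\<bar> powr p) * indicator \<Omega> x = ennreal (\<tau> powr p) * g1 x" for x
    using t by (auto simp: g1_def powr_divide ennreal_mult[symmetric] indicator_def)
  have e2: "ennreal (\<mu> x * \<bar>f x\<bar> powr q) * indicator \<Omega> x = ennreal (\<tau> powr q) * g2 x" for x
    using t by (auto simp: g2_def powr_divide ennreal_mult'[symmetric] indicator_def field_simps)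
  have "(\<integral>\<^sup>+x. ennreal (\<bar>f x\<bar> powr p) * indicator \<Omega> x \<partial>lebesgue) = ennreal (\<tau> powr p) * (\<integral>\<^sup>+x. g1 x \<partial>lebesgue)"
    by (simp add: e1 nn_integral_cmult[OF g1m])
  also have "\<dots> \<le> ennreal (\<tau> powr p)" using I1 mult_left_mono[OF I1, of "ennreal (\<tau> powr p)"] by simp
  finally have A: "(\<integral>\<^sup>+x. ennreal (\<bar>f x\<bar> powr p) * indicator \<Omega> x \<partial>lebesgue) \<le> ennreal (\<tau> powr p)" .
  have "(\<integral>\<^sup>+x. ennreal (\<mu> x * \<bar>f x\<bar> powr q) * indicator \<Omega> x \<partial>lebesgue) = ennreal (\<tau> powr q) * (\<integral>\<^sup>+x. g2 x \<partial>lebesgue)"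
    by (simp add: e2 nn_integral_cmult[OF g2m])
  also have "\<dots> \<le> ennreal (\<tau> powr q)" using mult_left_mono[OF I2, of "ennreal (\<tau> powr q)"] by simp
  finally show ?thesis using A t te by blast
qed

lemma borel_lebesgue: "f \<in> borel_measurable borel \<Longrightarrow> f \<in> borel_measurable lebesgue"
  by (rule measurable_completion) simp

lemma cc_sub:
  assumes "\<phi> \<in> Cc_inf \<Omega>"
  shows "closure {x. \<phi> x \<noteq> 0} \<subseteq> \<Omega>" "compact (closure {x. \<phi> x \<noteq> 0})" "C_inf_on UNIV \<phi>"
  using assms unfolding Cc_inf_def by simp_all

lemma cc_zero_outside:
  assumes "\<phi> \<in> Cc_inf \<Omega>" "x \<notin> \<Omega>"
  shows "\<phi> x = 0"
proof -
  have "x \<notin> closure {x. \<phi> x \<noteq> 0}" by (rule contra_subsetD[OF cc_sub(1)[OF assms(1)] assms(2)])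
  then have "x \<notin> {x. \<phi> x \<noteq> 0}" by (rule contra_subsetD[OF closure_subset])
  then show ?thesis by simp
qed

lemma cc_grad_zero_outside:
  fixes \<phi> :: "real^'n::finite \<Rightarrow> real"
  assumes cc: "\<phi> \<in> Cc_inf \<Omega>" and x: "x \<notin> closure {x. \<phi> x \<noteq> 0}"
  shows "grad \<phi> x = 0"
proof -
  define K where "K = closure {x. \<phi> x \<noteq> 0}"
  have "open (- K)" unfolding K_def by (intro open_Compl closed_closure)
  then obtain e where e: "e > 0" "ball x e \<subseteq> - K" using x unfolding K_def by (meson ComplI open_contains_ball)
  have z: "\<phi> y = 0" if "y \<in> ball x e" for y
  proof -
    have "y \<notin> K" using e that by blast
    then have "y \<notin> {x. \<phi> x \<noteq> 0}" unfolding K_def by (rule contra_subsetD[OF closure_subset])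
    then show ?thesis by simp
  qed
  have "partial i \<phi> x = 0" for i
  proof -
    have ev: "eventually (\<lambda>t. \<phi> (x + t *\<^sub>R axis i 1) = 0) (nhds 0)"
    proof -
      have "eventually (\<lambda>t::real. t \<in> ball 0 e) (nhds 0)"
        using e by (intro eventually_nhds_in_open) auto
      then show ?thesis
        by eventually_elim (auto intro!: z simp: dist_norm)
    qed
    have "((\<lambda>t. \<phi> (x + t *\<^sub>R axis i 1)) has_real_derivative 0) (at 0)"
      by (subst DERIV_cong_ev[OF refl ev refl]) simp
    then show ?thesis unfolding partial_def by (rule DERIV_imp_deriv)
  qed
  then show ?thesis by (simp add: grad_def vec_eq_iff)
qed

lemma cc_grad_zero_outside':
  fixes \<phi> :: "real^'n::finite \<Rightarrow> real"
  assumes cc: "\<phi> \<in> Cc_inf \<Omega>" and x: "x \<notin> \<Omega>"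
  shows "grad \<phi> x = 0"
proof -
  have "x \<notin> closure {x. \<phi> x \<noteq> 0}" by (rule contra_subsetD[OF cc_sub(1)[OF cc] x])
  then show ?thesis by (rule cc_grad_zero_outside[OF cc])
qed

lemma cc_grad_bounded:
  fixes \<phi> :: "real^'n::finite \<Rightarrow> real"
  assumes cc: "\<phi> \<in> Cc_inf \<Omega>"
  shows "\<exists>M\<ge>0. \<forall>x. norm (grad \<phi> x) \<le> M"
proof -
  define K where "K = closure {x. \<phi> x \<noteq> 0}"
  have Kc: "compact K" using cc_sub(2)[OF cc] unfolding K_def .
  have gc: "continuous_on UNIV (grad \<phi>)" by (rule smooth_c_grad_cont[OF Cc_inf_smooth_c[OF cc]])
  have "compact (grad \<phi> ` K)" using compact_continuous_image[OF continuous_on_subset[OF gc] Kc] by simp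
  then obtain M where M: "\<And>y. y \<in> grad \<phi> ` K \<Longrightarrow> norm y \<le> M" using compact_imp_bounded bounded_iff by metis
  have "norm (grad \<phi> x) \<le> max M 0" for x
    using M[of "grad \<phi> x"] cc_grad_zero_outside[OF cc, of x] unfolding K_def by (cases "x \<in> K") (auto simp: K_def)
  then show ?thesis by (intro exI[of _ "max M 0"]) auto
qed

lemma pow_sum_le:
  fixes a b p :: real
  assumes "a \<ge> 0" "b \<ge> 0" "p > 0"
  shows "(a + b) powr p \<le> 2 powr p * (a powr p + b powr p)"
proof -
  have "(a + b) powr p \<le> (2 * max a b) powr p" using assms by (intro powr_mono2) auto
  also have "\<dots> = 2 powr p * max a b powr p" using assms by (simp add: powr_mult)
  also have "\<dots> \<le> 2 powr p * (a powr p + b powr p)"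
    using assms by (intro mult_left_mono) (auto simp: max_def)
  finally show ?thesis .
qed

lemma int_on_Omega:
  fixes f :: "'a::euclidean_space \<Rightarrow> real"
  assumes Om: "\<Omega> \<in> sets lebesgue" and fm: "f \<in> borel_measurable lebesgue"
    and nn: "\<And>x. x \<in> \<Omega> \<Longrightarrow> 0 \<le> f x"
    and fin: "(\<integral>\<^sup>+x. ennreal (f x) * indicator \<Omega> x \<partial>lebesgue) < top"
  shows "integrable (lebesgue_on \<Omega>) f"
    and "ennreal (integral\<^sup>L (lebesgue_on \<Omega>) f) = (\<integral>\<^sup>+x. ennreal (f x) * indicator \<Omega> x \<partial>lebesgue)"
proof -
  have m: "f \<in> borel_measurable (lebesgue_on \<Omega>)" using fm by (rule measurable_restrict_space1)
  have e: "(\<integral>\<^sup>+x. ennreal (f x) \<partial>lebesgue_on \<Omega>) = (\<integral>\<^sup>+x. ennreal (f x) * indicator \<Omega> x \<partial>lebesgue)"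
    using Om by (simp add: nn_integral_restrict_space)
  show i: "integrable (lebesgue_on \<Omega>) f"
    using fin e m nn by (intro integrableI_nonneg) (auto simp: AE_restrict_space_iff)
  show "ennreal (integral\<^sup>L (lebesgue_on \<Omega>) f) = (\<integral>\<^sup>+x. ennreal (f x) * indicator \<Omega> x \<partial>lebesgue)"
  proof -
    have "AE x in lebesgue_on \<Omega>. 0 \<le> f x" using nn by (intro AE_I2) simp
    from nn_integral_eq_integral[OF i this] e show ?thesis by simp
  qed
qed

locale wsetting =
  fixes \<Omega> :: "(real^'n::finite) set" and H :: "real^'n \<Rightarrow> real" and \<mu> :: "real^'n \<Rightarrow> real"
    and p q c C M\<mu> :: real
  assumes Om_open: "open \<Omega>" and Om_bdd: "bounded \<Omega>"
    and Hcont: "continuous_on UNIV H" and cpos: "c > 0" and Hlow: "\<And>\<xi>. c * norm \<xi> \<le> \<bar>H \<xi>\<bar>"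
    and Cpos: "C > 0" and Hup: "\<And>\<xi>. \<bar>H \<xi>\<bar> \<le> C * norm \<xi>"
    and mu: "\<And>x. x \<in> \<Omega> \<Longrightarrow> 0 \<le> \<mu> x \<and> \<mu> x \<le> M\<mu>" and Mmu: "M\<mu> \<ge> 0"
    and mum: "(\<lambda>x. \<mu> x * indicator \<Omega> x) \<in> borel_measurable lebesgue"
    and pq: "1 < p" "p < q"
begin

lemma Om_sets[measurable]: "\<Omega> \<in> sets lebesgue"
  using Om_open by (simp add: lmeasurable_open Om_bdd fmeasurableD)

lemma Om_fin: "emeasure lebesgue \<Omega> < top"
  using fmeasurableD2[OF lmeasurable_open[OF Om_bdd Om_open]] less_top by blast

lemma Hm[measurable]: "H \<in> borel_measurable borel"
  using Hcont by (rule borel_measurable_continuous_onI)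

lemma cc_gradm[measurable]: "\<phi> \<in> Cc_inf \<Omega> \<Longrightarrow> grad \<phi> \<in> borel_measurable lebesgue"
  by (intro borel_lebesgue borel_measurable_continuous_onI smooth_c_grad_cont Cc_inf_smooth_c)

lemma cc_m[measurable]: "\<phi> \<in> Cc_inf \<Omega> \<Longrightarrow> \<phi> \<in> borel_measurable lebesgue"
  by (intro borel_lebesgue borel_measurable_continuous_onI smooth_c_cont Cc_inf_smooth_c)

lemma nn_bound_split:
  fixes g :: "real^'n \<Rightarrow> real"
  assumes gm: "g \<in> borel_measurable lebesgue" and A: "A \<ge> 0" and B: "B \<ge> 0"
    and fin: "(\<integral>\<^sup>+x. ennreal (g x) * indicator \<Omega> x \<partial>lebesgue) < top"
    and le: "\<And>x. x \<in> \<Omega> \<Longrightarrow> f x \<le> A + B * g x" and gnn: "\<And>x. x \<in> \<Omega> \<Longrightarrow> 0 \<le> g x"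
  shows "(\<integral>\<^sup>+x. ennreal (f x) * indicator \<Omega> x \<partial>lebesgue) < top"
proof -
  have "(\<integral>\<^sup>+x. ennreal (f x) * indicator \<Omega> x \<partial>lebesgue) \<le>
      (\<integral>\<^sup>+x. ennreal A * indicator \<Omega> x + ennreal B * (ennreal (g x) * indicator \<Omega> x) \<partial>lebesgue)"
  proof (rule nn_integral_mono)
    fix x show "ennreal (f x) * indicator \<Omega> x \<le> ennreal A * indicator \<Omega> x + ennreal B * (ennreal (g x) * indicator \<Omega> x)"
    proof (cases "x \<in> \<Omega>")
      case True
      have "ennreal (f x) \<le> ennreal (A + B * g x)" using le True by (intro ennreal_leI) auto
      also have "\<dots> = ennreal A + ennreal B * ennreal (g x)" using A B gnn True by (simp add: ennreal_plus ennreal_mult)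
      finally show ?thesis using True by simp
    qed simp
  qed
  also have "\<dots> = ennreal A * emeasure lebesgue \<Omega> + ennreal B * (\<integral>\<^sup>+x. ennreal (g x) * indicator \<Omega> x \<partial>lebesgue)"
    using gm by (simp add: nn_integral_add nn_integral_cmult nn_integral_cmult_indicator)
  also have "\<dots> < top"
    using Om_fin fin by (simp add: ennreal_mult_less_top)
  finally show ?thesis .
qed

lemma W1:
  assumes uG: "(u, G) \<in> W0 \<Omega> H \<mu> p q"
  shows "(\<integral>\<^sup>+x. ennreal (\<bar>H (G x)\<bar> powr p) * indicator \<Omega> x \<partial>lebesgue) < top"
    and "(\<integral>\<^sup>+x. ennreal (\<mu> x * \<bar>H (G x)\<bar> powr q) * indicator \<Omega> x \<partial>lebesgue) < top"
    and "integrable (lebesgue_on \<Omega>) (\<lambda>x. \<bar>H (G x)\<bar> powr p)"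
    and "integrable (lebesgue_on \<Omega>) (\<lambda>x. \<mu> x * \<bar>H (G x)\<bar> powr q)"
proof -
  obtain \<phi> where um[measurable]: "u \<in> borel_measurable lebesgue" and Gm[measurable]: "G \<in> borel_measurable lebesgue"
    and cc: "\<And>k. \<phi> k \<in> Cc_inf \<Omega>"
    and lim2: "(\<lambda>k. lux_norm \<Omega> \<mu> p q (\<lambda>x. H (grad (\<phi> k) x - G x))) \<longlonglongrightarrow> 0"
    using uG unfolding W0_def by blast
  obtain k where k: "lux_norm \<Omega> \<mu> p q (\<lambda>x. H (grad (\<phi> k) x - G x)) < ennreal 1"
    using order_tendstoD(2)[OF lim2, of "ennreal 1"] by (auto simp: eventually_sequentially)
  define f where "f x = H (grad (\<phi> k) x - G x)" for x
  have fm[measurable]: "f \<in> borel_measurable lebesgue" unfolding f_def using cc[of k] by measurable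
  obtain \<tau> where t: "0 < \<tau>" "\<tau> < 1"
    and If: "(\<integral>\<^sup>+x. ennreal (\<bar>f x\<bar> powr p) * indicator \<Omega> x \<partial>lebesgue) \<le> ennreal (\<tau> powr p)"
    and Ifq: "(\<integral>\<^sup>+x. ennreal (\<mu> x * \<bar>f x\<bar> powr q) * indicator \<Omega> x \<partial>lebesgue) \<le> ennreal (\<tau> powr q)"
    using lux_small[OF k[folded f_def] _ fm mum Om_sets] mu by blast
  have Ifin: "(\<integral>\<^sup>+x. ennreal (\<bar>f x\<bar> powr p) * indicator \<Omega> x \<partial>lebesgue) < top"
    using If by (simp add: top.not_eq_extremum order_le_less_trans)
  have Ifqfin: "(\<integral>\<^sup>+x. ennreal (\<mu> x * indicator \<Omega> x * \<bar>f x\<bar> powr q) * indicator \<Omega> x \<partial>lebesgue) < top"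
  proof -
    have "(\<integral>\<^sup>+x. ennreal (\<mu> x * indicator \<Omega> x * \<bar>f x\<bar> powr q) * indicator \<Omega> x \<partial>lebesgue)
        = (\<integral>\<^sup>+x. ennreal (\<mu> x * \<bar>f x\<bar> powr q) * indicator \<Omega> x \<partial>lebesgue)"
      by (intro nn_integral_cong) (auto simp: indicator_def)
    then show ?thesis using Ifq by (simp add: top.not_eq_extremum order_le_less_trans)
  qed
  obtain Mg where Mg: "Mg \<ge> 0" "\<And>x. norm (grad (\<phi> k) x) \<le> Mg" using cc_grad_bounded[OF cc[of k]] by blast
  have pt: "\<bar>H (G x)\<bar> \<le> C * Mg + (C / c) * \<bar>f x\<bar>" for x
  proof -
    have "norm (G x) \<le> norm (grad (\<phi> k) x) + norm (grad (\<phi> k) x - G x)"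
      using norm_triangle_ineq4[of "grad (\<phi> k) x" "grad (\<phi> k) x - G x"] by simp
    also have "norm (grad (\<phi> k) x - G x) \<le> \<bar>f x\<bar> / c"
      using Hlow[of "grad (\<phi> k) x - G x"] cpos by (simp add: f_def field_simps)
    finally have "norm (G x) \<le> Mg + \<bar>f x\<bar> / c" using Mg(2)[of x] by simp
    then have "C * norm (G x) \<le> C * (Mg + \<bar>f x\<bar> / c)" using Cpos by (intro mult_left_mono) auto
    then show ?thesis using Hup[of "G x"] by (simp add: algebra_simps)
  qed
  have pt2: "\<bar>H (G x)\<bar> powr r \<le> 2 powr r * (C * Mg) powr r + 2 powr r * (C / c) powr r * \<bar>f x\<bar> powr r"
    if r: "r > 0" for x r
  proof -
    have "\<bar>H (G x)\<bar> powr r \<le> (C * Mg + (C / c) * \<bar>f x\<bar>) powr r"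
      using pt[of x] r by (intro powr_mono2) auto
    also have "\<dots> \<le> 2 powr r * ((C * Mg) powr r + ((C / c) * \<bar>f x\<bar>) powr r)"
      using Cpos cpos Mg r by (intro pow_sum_le) auto
    also have "\<dots> = 2 powr r * (C * Mg) powr r + 2 powr r * (C / c) powr r * \<bar>f x\<bar> powr r"
    proof -
      have e: "((C / c) * \<bar>f x\<bar>) powr r = (C / c) powr r * \<bar>f x\<bar> powr r"
        by (rule powr_mult)
      show ?thesis unfolding e by (simp only: distrib_left mult.assoc)
    qed
    finally show ?thesis .
  qed
  have HGm[measurable]: "(\<lambda>x. H (G x)) \<in> borel_measurable lebesgue" by measurable
  show A: "(\<integral>\<^sup>+x. ennreal (\<bar>H (G x)\<bar> powr p) * indicator \<Omega> x \<partial>lebesgue) < top"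
    using pq pt2[of p]
    by (intro nn_bound_split[OF _ _ _ Ifin, where A = "2 powr p * (C * Mg) powr p" and B = "2 powr p * (C / c) powr p"]) auto
  have Bq: "(\<integral>\<^sup>+x. ennreal (\<mu> x * indicator \<Omega> x * \<bar>H (G x)\<bar> powr q) * indicator \<Omega> x \<partial>lebesgue) < top"
  proof (rule nn_bound_split[OF _ _ _ Ifqfin])
    show "(\<lambda>x. \<mu> x * indicator \<Omega> x * \<bar>f x\<bar> powr q) \<in> borel_measurable lebesgue" using mum by measurable
    show "0 \<le> M\<mu> * (2 powr q * (C * Mg) powr q)" using Mmu by simp
    show "0 \<le> 2 powr q * (C / c) powr q" by simp
    fix x assume x: "x \<in> \<Omega>"
    show "0 \<le> \<mu> x * indicator \<Omega> x * \<bar>f x\<bar> powr q" using mu[OF x] by simp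
    have "\<mu> x * \<bar>H (G x)\<bar> powr q \<le> \<mu> x * (2 powr q * (C * Mg) powr q + 2 powr q * (C / c) powr q * \<bar>f x\<bar> powr q)"
      using mu[OF x] pt2[of q x] pq by (intro mult_left_mono) auto
    also have "\<dots> \<le> M\<mu> * (2 powr q * (C * Mg) powr q) + 2 powr q * (C / c) powr q * (\<mu> x * \<bar>f x\<bar> powr q)"
      using mu[OF x] by (simp add: algebra_simps mult_right_mono)
    finally show "\<mu> x * indicator \<Omega> x * \<bar>H (G x)\<bar> powr q \<le> M\<mu> * (2 powr q * (C * Mg) powr q) + 2 powr q * (C / c) powr q * (\<mu> x * indicator \<Omega> x * \<bar>f x\<bar> powr q)"
      using x by simp
  qed
  show "(\<integral>\<^sup>+x. ennreal (\<mu> x * \<bar>H (G x)\<bar> powr q) * indicator \<Omega> x \<partial>lebesgue) < top"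
  proof -
    have "(\<integral>\<^sup>+x. ennreal (\<mu> x * \<bar>H (G x)\<bar> powr q) * indicator \<Omega> x \<partial>lebesgue)
        = (\<integral>\<^sup>+x. ennreal (\<mu> x * indicator \<Omega> x * \<bar>H (G x)\<bar> powr q) * indicator \<Omega> x \<partial>lebesgue)"
      by (intro nn_integral_cong) (auto simp: indicator_def)
    then show ?thesis using Bq by simp
  qed
  show "integrable (lebesgue_on \<Omega>) (\<lambda>x. \<bar>H (G x)\<bar> powr p)"
    by (rule int_on_Omega(1)[OF Om_sets _ _ A]) auto
  have "integrable (lebesgue_on \<Omega>) (\<lambda>x. \<mu> x * indicator \<Omega> x * \<bar>H (G x)\<bar> powr q)"
    by (rule int_on_Omega(1)[OF Om_sets _ _ Bq]) (use mum mu in auto)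
  then show "integrable (lebesgue_on \<Omega>) (\<lambda>x. \<mu> x * \<bar>H (G x)\<bar> powr q)"
    by (rule Bochner_Integration.integrable_cong[THEN iffD1, rotated -1]) auto
qed

lemma ev_small:
  assumes lim: "(\<lambda>k. lux_norm \<Omega> \<mu> p q (f k)) \<longlonglongrightarrow> 0"
    and fm: "\<And>k. f k \<in> borel_measurable lebesgue" and e: "e > 0"
  shows "eventually (\<lambda>k. (\<integral>\<^sup>+x. ennreal (\<bar>f k x\<bar> powr p) * indicator \<Omega> x \<partial>lebesgue) \<le> ennreal e) sequentially"
proof -
  have p0: "p > 0" using pq by simp
  have "eventually (\<lambda>k. lux_norm \<Omega> \<mu> p q (f k) < ennreal (e powr (1 / p))) sequentially"
    using order_tendstoD(2)[OF lim, of "ennreal (e powr (1 / p))"] e by simp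
  then show ?thesis
  proof eventually_elim
    case (elim k)
    obtain \<tau> where t: "0 < \<tau>" "\<tau> < e powr (1 / p)"
      and I: "(\<integral>\<^sup>+x. ennreal (\<bar>f k x\<bar> powr p) * indicator \<Omega> x \<partial>lebesgue) \<le> ennreal (\<tau> powr p)"
      using lux_small[OF elim _ fm mum Om_sets] mu by blast
    have "\<tau> powr p \<le> (e powr (1 / p)) powr p" using t p0 by (intro powr_mono2) auto
    also have "\<dots> = e" using e p0 by (simp add: powr_powr)
    finally show ?case using I by (meson ennreal_leI order_trans)
  qed
qed

lemma W2:
  assumes N: "CARD('n) \<ge> 2" "p < real CARD('n)"
  defines "ps \<equiv> real CARD('n) * p / (real CARD('n) - p)"
  shows "\<exists>S>0. \<forall>u G. (u, G) \<in> W0 \<Omega> H \<mu> p q \<longrightarrow>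
     integrable (lebesgue_on \<Omega>) (\<lambda>x. \<bar>u x\<bar> powr ps) \<and>
     integral\<^sup>L (lebesgue_on \<Omega>) (\<lambda>x. \<bar>u x\<bar> powr ps) \<le> S * (integral\<^sup>L (lebesgue_on \<Omega>) (\<lambda>x. \<bar>H (G x)\<bar> powr p)) powr (ps / p)"
proof -
  have p0: "p > 0" "p > 1" using pq by auto
  have ps0: "ps > 0" using N p0 by (simp add: ps_def)
  define \<Gamma> where "\<Gamma> = (p * (real CARD('n) - 1) / (real CARD('n) - p)) powr ps"
  define K1 where "K1 = 2 powr p / c powr p"
  have K1: "K1 > 0" using cpos by (simp add: K1_def)
  have G0: "\<Gamma> > 0" using N p0 by (simp add: \<Gamma>_def)
  define S where "S = \<Gamma> * K1 powr (ps / p)"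
  have S0: "S > 0" using G0 K1 by (simp add: S_def)
  have main: "integrable (lebesgue_on \<Omega>) (\<lambda>x. \<bar>u x\<bar> powr ps) \<and>
     integral\<^sup>L (lebesgue_on \<Omega>) (\<lambda>x. \<bar>u x\<bar> powr ps) \<le> S * (integral\<^sup>L (lebesgue_on \<Omega>) (\<lambda>x. \<bar>H (G x)\<bar> powr p)) powr (ps / p)"
    if uG: "(u, G) \<in> W0 \<Omega> H \<mu> p q" for u G
  proof -
    obtain \<phi> where um[measurable]: "u \<in> borel_measurable lebesgue" and Gm[measurable]: "G \<in> borel_measurable lebesgue"
      and cc: "\<And>k. \<phi> k \<in> Cc_inf \<Omega>"
      and lim1: "(\<lambda>k. lux_norm \<Omega> \<mu> p q (\<lambda>x. \<phi> k x - u x)) \<longlonglongrightarrow> 0"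
      and lim2: "(\<lambda>k. lux_norm \<Omega> \<mu> p q (\<lambda>x. H (grad (\<phi> k) x - G x))) \<longlonglongrightarrow> 0"
      using uG unfolding W0_def by blast
    note ccm[measurable] = cc_m[OF cc] cc_gradm[OF cc]
    define a where "a k = (\<integral>\<^sup>+x. ennreal (\<bar>\<phi> k x - u x\<bar> powr p) * indicator \<Omega> x \<partial>lebesgue)" for k
    define b where "b k = (\<integral>\<^sup>+x. ennreal (\<bar>H (grad (\<phi> k) x - G x)\<bar> powr p) * indicator \<Omega> x \<partial>lebesgue)" for k
    have ea: "eventually (\<lambda>k. a k \<le> ennreal e) sequentially" if "e > 0" for e
      unfolding a_def by (rule ev_small[OF lim1 _ that]) measurable
    have eb: "eventually (\<lambda>k. b k \<le> ennreal e) sequentially" if "e > 0" for e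
      unfolding b_def by (rule ev_small[OF lim2 _ that]) measurable
    define Y where "Y = (\<integral>\<^sup>+x. ennreal (\<bar>H (G x)\<bar> powr p) * indicator \<Omega> x \<partial>lebesgue)"
    have Yfin: "Y < top" unfolding Y_def by (rule W1(1)[OF uG])
    define y where "y = integral\<^sup>L (lebesgue_on \<Omega>) (\<lambda>x. \<bar>H (G x)\<bar> powr p)"
    have Yy: "Y = ennreal y" unfolding Y_def y_def
      by (rule int_on_Omega(2)[OF Om_sets _ _ Yfin[unfolded Y_def], symmetric]) auto
    have y0: "y \<ge> 0" unfolding y_def by (rule integral_nonneg_AE) auto
    define P where "P k = (\<integral>\<^sup>+x. ennreal (\<bar>\<phi> k x\<bar> powr ps) * indicator \<Omega> x \<partial>lebesgue)" for k
    have Pk: "P k \<le> ennreal \<Gamma> * epow (ennreal K1 * (Y + b k)) (ps / p)" for k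
    proof -
      have sc: "smooth_c (\<phi> k)" by (rule Cc_inf_smooth_c[OF cc])
      have gb: "(\<integral>\<^sup>+x. ennreal (norm (grad (\<phi> k) x) powr p) \<partial>lborel) \<le> ennreal K1 * (Y + b k)"
      proof -
        have "(\<integral>\<^sup>+x. ennreal (norm (grad (\<phi> k) x) powr p) \<partial>lborel)
            = (\<integral>\<^sup>+x. ennreal (norm (grad (\<phi> k) x) powr p) \<partial>lebesgue)"
          by (simp add: nn_integral_completion)
        also have "\<dots> = (\<integral>\<^sup>+x. ennreal (norm (grad (\<phi> k) x) powr p) * indicator \<Omega> x \<partial>lebesgue)"
          by (intro nn_integral_cong) (auto simp: indicator_def cc_grad_zero_outside'[OF cc])
        also have "\<dots> \<le> (\<integral>\<^sup>+x. ennreal K1 * (ennreal (\<bar>H (G x)\<bar> powr p) * indicator \<Omega> x +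
              ennreal (\<bar>H (grad (\<phi> k) x - G x)\<bar> powr p) * indicator \<Omega> x) \<partial>lebesgue)"
        proof (rule nn_integral_mono)
          fix x
          have "norm (grad (\<phi> k) x) \<le> norm (G x) + norm (grad (\<phi> k) x - G x)"
            using norm_triangle_ineq[of "G x" "grad (\<phi> k) x - G x"] by simp
          also have "\<dots> \<le> \<bar>H (G x)\<bar> / c + \<bar>H (grad (\<phi> k) x - G x)\<bar> / c"
            using Hlow[of "G x"] Hlow[of "grad (\<phi> k) x - G x"] cpos by (simp add: field_simps)
          finally have "norm (grad (\<phi> k) x) powr p \<le> (\<bar>H (G x)\<bar> / c + \<bar>H (grad (\<phi> k) x - G x)\<bar> / c) powr p"
            using p0 by (intro powr_mono2) auto
          also have "\<dots> \<le> 2 powr p * ((\<bar>H (G x)\<bar> / c) powr p + (\<bar>H (grad (\<phi> k) x - G x)\<bar> / c) powr p)"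
            using cpos p0 by (intro pow_sum_le) auto
          also have "\<dots> = K1 * (\<bar>H (G x)\<bar> powr p + \<bar>H (grad (\<phi> k) x - G x)\<bar> powr p)"
            using cpos by (simp add: K1_def powr_divide field_simps)
          finally have le: "norm (grad (\<phi> k) x) powr p \<le> K1 * (\<bar>H (G x)\<bar> powr p + \<bar>H (grad (\<phi> k) x - G x)\<bar> powr p)" .
          show "ennreal (norm (grad (\<phi> k) x) powr p) * indicator \<Omega> x \<le> ennreal K1 * (ennreal (\<bar>H (G x)\<bar> powr p) * indicator \<Omega> x +
              ennreal (\<bar>H (grad (\<phi> k) x - G x)\<bar> powr p) * indicator \<Omega> x)"
          proof (cases "x \<in> \<Omega>")
            case True
            have "ennreal (norm (grad (\<phi> k) x) powr p) \<le> ennreal (K1 * (\<bar>H (G x)\<bar> powr p + \<bar>H (grad (\<phi> k) x - G x)\<bar> powr p))"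
              using le by (rule ennreal_leI)
            also have "\<dots> = ennreal K1 * (ennreal (\<bar>H (G x)\<bar> powr p) + ennreal (\<bar>H (grad (\<phi> k) x - G x)\<bar> powr p))"
              using K1 by (simp add: ennreal_mult ennreal_plus)
            finally show ?thesis using True by simp
          qed simp
        qed
        also have "\<dots> = ennreal K1 * (Y + b k)"
          unfolding Y_def b_def by (simp add: nn_integral_cmult nn_integral_add)
        finally show ?thesis .
      qed
      have "P k \<le> (\<integral>\<^sup>+x. ennreal (\<bar>\<phi> k x\<bar> powr ps) \<partial>lebesgue)"
        unfolding P_def by (intro nn_integral_mono) (auto simp: indicator_def)
      also have "\<dots> = (\<integral>\<^sup>+x. ennreal (\<bar>\<phi> k x\<bar> powr ps) \<partial>lborel)"
        by (simp add: nn_integral_completion)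
      also have "\<dots> \<le> ennreal \<Gamma> * epow (\<integral>\<^sup>+x. ennreal (norm (grad (\<phi> k) x) powr p) \<partial>lborel) (ps / p)"
        using sobolev_smooth[OF sc N(1) p0(2) N(2)] unfolding \<Gamma>_def ps_def by simp
      also have "\<dots> \<le> ennreal \<Gamma> * epow (ennreal K1 * (Y + b k)) (ps / p)"
        using ps0 p0 by (intro mult_left_mono epow_mono gb) auto
      finally show ?thesis .
    qed
    obtain k0 where k0: "\<And>k. k \<ge> k0 \<Longrightarrow> a k \<le> ennreal 1"
      using ea[of 1] by (auto simp: eventually_sequentially)
    define w where "w n x = \<bar>\<phi> (n + k0) x - u x\<bar> powr p" for n x
    have afin: "a (n + k0) < top" for n
      using k0[of "n + k0"] by (simp add: order_le_less_trans)
    have wint: "integrable (lebesgue_on \<Omega>) (w n)" for n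
      unfolding w_def by (rule int_on_Omega(1)[OF Om_sets]) (use afin[of n] in \<open>auto simp: a_def\<close>)
    have wI: "ennreal (integral\<^sup>L (lebesgue_on \<Omega>) (w n)) = a (n + k0)" for n
      unfolding w_def a_def by (rule int_on_Omega(2)[OF Om_sets]) (use afin[of n] in \<open>auto simp: a_def\<close>)
    have wnn: "integral\<^sup>L (lebesgue_on \<Omega>) (w n) \<ge> 0" for n
      unfolding w_def by (rule integral_nonneg_AE) auto
    have wlim: "(\<lambda>n. \<integral>x. norm (w n x) \<partial>lebesgue_on \<Omega>) \<longlonglongrightarrow> 0"
    proof -
      have eq: "(\<integral>x. norm (w n x) \<partial>lebesgue_on \<Omega>) = integral\<^sup>L (lebesgue_on \<Omega>) (w n)" for n
        by (intro Bochner_Integration.integral_cong) (auto simp: w_def)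
      have "(\<lambda>n. integral\<^sup>L (lebesgue_on \<Omega>) (w n)) \<longlonglongrightarrow> 0"
      proof (rule order_tendstoI)
        fix e :: real assume "e < 0"
        then show "eventually (\<lambda>n. e < integral\<^sup>L (lebesgue_on \<Omega>) (w n)) sequentially"
          using wnn by (auto intro: always_eventually less_le_trans)
      next
        fix e :: real assume e: "0 < e"
        obtain K where K: "\<And>k. k \<ge> K \<Longrightarrow> a k \<le> ennreal (e / 2)"
          using ea[of "e / 2"] e by (auto simp: eventually_sequentially)
        have "integral\<^sup>L (lebesgue_on \<Omega>) (w n) < e" if "n \<ge> K" for n
        proof -
          have "ennreal (integral\<^sup>L (lebesgue_on \<Omega>) (w n)) \<le> ennreal (e / 2)"
            using K[of "n + k0"] that wI[of n] by simp
          then have "integral\<^sup>L (lebesgue_on \<Omega>) (w n) \<le> e / 2" using e by (simp add: ennreal_le_iff)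
          then show ?thesis using e by simp
        qed
        then show "eventually (\<lambda>n. integral\<^sup>L (lebesgue_on \<Omega>) (w n) < e) sequentially"
          by (auto simp: eventually_sequentially)
      qed
      then show ?thesis unfolding eq .
    qed
    obtain r where r: "strict_mono r" "AE x in lebesgue_on \<Omega>. (\<lambda>n. w (r n) x) \<longlonglongrightarrow> 0"
      using tendsto_L1_AE_subseq[OF wint wlim] by blast
    define s where "s n = r n + k0" for n
    have sn: "n \<le> s n" for n using seq_suble[OF r(1), of n] by (simp add: s_def)
    have conv: "AE x in lebesgue_on \<Omega>. (\<lambda>n. \<phi> (s n) x) \<longlonglongrightarrow> u x"
      using r(2)
    proof eventually_elim
      case (elim x)
      have "((\<lambda>n. w (r n) x powr (1 / p)) \<longlongrightarrow> 0) sequentially"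
        by (rule tendsto_zero_powrI[OF elim tendsto_const]) (use p0 in \<open>auto simp: w_def\<close>)
      moreover have "w (r n) x powr (1 / p) = \<bar>\<phi> (s n) x - u x\<bar>" for n
        using p0 by (simp add: w_def s_def powr_powr)
      ultimately have "((\<lambda>n. \<bar>\<phi> (s n) x - u x\<bar>) \<longlongrightarrow> 0) sequentially" by simp
      then have "((\<lambda>n. \<phi> (s n) x - u x) \<longlongrightarrow> 0) sequentially"
        by (rule tendsto_rabs_zero_cancel)
      then show ?case by (simp add: LIM_zero_iff)
    qed
    define fn where "fn n x = ennreal (\<bar>\<phi> (s n) x\<bar> powr ps)" for n x
    have fnm: "fn n \<in> borel_measurable (lebesgue_on \<Omega>)" for n
      unfolding fn_def by (intro measurable_restrict_space1) measurable
    have AEl: "AE x in lebesgue_on \<Omega>. liminf (\<lambda>n. fn n x) = ennreal (\<bar>u x\<bar> powr ps)"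
      using conv
    proof eventually_elim
      case (elim x)
      have "((\<lambda>n. \<bar>\<phi> (s n) x\<bar> powr ps) \<longlongrightarrow> \<bar>u x\<bar> powr ps) sequentially"
        by (rule tendsto_powr'[OF tendsto_rabs[OF elim] tendsto_const]) (use ps0 in auto)
      then have "((\<lambda>n. fn n x) \<longlongrightarrow> ennreal (\<bar>u x\<bar> powr ps)) sequentially"
        unfolding fn_def by (rule tendsto_ennrealI)
      then show ?case by (intro lim_imp_Liminf) auto
    qed
    define X where "X = (\<integral>\<^sup>+x. ennreal (\<bar>u x\<bar> powr ps) \<partial>lebesgue_on \<Omega>)"
    have Xle: "X \<le> liminf (\<lambda>n. P (s n))"
    proof -
      have "X = (\<integral>\<^sup>+x. liminf (\<lambda>n. fn n x) \<partial>lebesgue_on \<Omega>)"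
        unfolding X_def using AEl by (intro nn_integral_cong_AE) auto
      also have "\<dots> \<le> liminf (\<lambda>n. \<integral>\<^sup>+x. fn n x \<partial>lebesgue_on \<Omega>)"
        by (rule nn_integral_liminf[OF fnm])
      also have "(\<lambda>n. \<integral>\<^sup>+x. fn n x \<partial>lebesgue_on \<Omega>) = (\<lambda>n. P (s n))"
        by (simp add: fn_def P_def nn_integral_restrict_space)
      finally show ?thesis .
    qed
    have bnd: "X \<le> ennreal (\<Gamma> * (K1 * (y + e)) powr (ps / p))" if e: "e > 0" for e
    proof -
      obtain K where K: "\<And>k. k \<ge> K \<Longrightarrow> b k \<le> ennreal e"
        using eb[OF e] by (auto simp: eventually_sequentially)
      have "P (s n) \<le> ennreal \<Gamma> * epow (ennreal K1 * (Y + ennreal e)) (ps / p)" if "n \<ge> K" for n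
      proof -
        have "b (s n) \<le> ennreal e" using K[of "s n"] sn[of n] that by simp
        then have "ennreal K1 * (Y + b (s n)) \<le> ennreal K1 * (Y + ennreal e)"
          by (intro mult_left_mono add_left_mono) auto
        then have "epow (ennreal K1 * (Y + b (s n))) (ps / p) \<le> epow (ennreal K1 * (Y + ennreal e)) (ps / p)"
          using ps0 p0 by (intro epow_mono) auto
        then show ?thesis using Pk[of "s n"] by (meson mult_left_mono order_trans zero_le)
      qed
      then have "liminf (\<lambda>n. P (s n)) \<le> ennreal \<Gamma> * epow (ennreal K1 * (Y + ennreal e)) (ps / p)"
        by (intro Liminf_le) (auto simp: eventually_sequentially)
      also have "ennreal \<Gamma> * epow (ennreal K1 * (Y + ennreal e)) (ps / p) = ennreal (\<Gamma> * (K1 * (y + e)) powr (ps / p))"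
      proof -
        have "ennreal K1 * (Y + ennreal e) = ennreal (K1 * (y + e))"
          using K1 y0 e by (simp add: Yy ennreal_plus ennreal_mult)
        then have "epow (ennreal K1 * (Y + ennreal e)) (ps / p) = ennreal ((K1 * (y + e)) powr (ps / p))"
          using K1 y0 e by (simp add: epow_ennreal)
        then show ?thesis using G0 by (simp add: ennreal_mult)
      qed
      finally show ?thesis using Xle by simp
    qed
    have Xfin: "X < top" using bnd[of 1] by (simp add: order_le_less_trans)
    have uabsm: "(\<lambda>x. \<bar>u x\<bar> powr ps) \<in> borel_measurable (lebesgue_on \<Omega>)"
      by (intro measurable_restrict_space1) measurable
    have uint: "integrable (lebesgue_on \<Omega>) (\<lambda>x. \<bar>u x\<bar> powr ps)"
      using Xfin uabsm by (intro integrableI_nonneg) (auto simp: X_def)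
    define xi where "xi = integral\<^sup>L (lebesgue_on \<Omega>) (\<lambda>x. \<bar>u x\<bar> powr ps)"
    have Xxi: "X = ennreal xi" unfolding X_def xi_def
      by (rule nn_integral_eq_integral[OF uint]) auto
    have xib: "xi \<le> \<Gamma> * (K1 * (y + e)) powr (ps / p)" if "e > 0" for e
    proof -
      have "ennreal xi \<le> ennreal (\<Gamma> * (K1 * (y + e)) powr (ps / p))" using bnd[OF that] Xxi by simp
      then show ?thesis using G0 by (simp add: ennreal_le_iff)
    qed
    have "xi \<le> \<Gamma> * (K1 * (y + 0)) powr (ps / p)"
    proof (rule tendsto_lowerbound)
      have l: "((\<lambda>e. K1 * (y + e)) \<longlongrightarrow> K1 * (y + 0)) (at_right 0)"
        by (intro tendsto_intros)
      have ev0: "eventually (\<lambda>e::real. 0 \<le> K1 * (y + e)) (at_right 0)"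
        using eventually_at_right_less[of "0::real"] by eventually_elim (use K1 y0 in auto)
      show "((\<lambda>e. \<Gamma> * (K1 * (y + e)) powr (ps / p)) \<longlongrightarrow> \<Gamma> * (K1 * (y + 0)) powr (ps / p)) (at_right 0)"
        by (intro tendsto_mult tendsto_const tendsto_powr'[OF l tendsto_const]) (use ps0 p0 ev0 in auto)
      show "eventually (\<lambda>e. xi \<le> \<Gamma> * (K1 * (y + e)) powr (ps / p)) (at_right 0)"
        using eventually_at_right_less[of "0::real"] by eventually_elim (rule xib)
      show "\<not> trivial_limit (at_right (0::real))" by simp
    qed
    also have "\<dots> = S * y powr (ps / p)" by (simp add: S_def powr_mult)
    finally show ?thesis using uint by (simp add: xi_def y_def)
  qed
  show ?thesis using S0 main by blast
qed

end

lemma plus_alg: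
  fixes Z t K \<theta> :: real
  assumes Z: "Z \<le> K * t powr \<theta>" and t: "0 \<le> t" "t \<le> Z" and th: "0 < \<theta>" "\<theta> < 1" and K: "K \<ge> 0"
  shows "Z \<le> K powr (1 / (1 - \<theta>))"
proof (cases "t = 0")
  case True
  then have "Z \<le> 0" using Z by simp
  also have "0 \<le> K powr (1 / (1 - \<theta>))" by simp
  finally show ?thesis .
next
  case False
  then have t0: "t > 0" using t by simp
  have "t \<le> K * t powr \<theta>" using Z t by simp
  then have "t / t powr \<theta> \<le> K" using t0 by (simp add: divide_le_eq mult.commute)
  moreover have "t / t powr \<theta> = t powr (1 - \<theta>)" using t0 by (simp add: powr_diff)
  ultimately have h: "t powr (1 - \<theta>) \<le> K" by simp
  have "t = (t powr (1 - \<theta>)) powr (1 / (1 - \<theta>))" using t0 th by (simp add: powr_powr)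
  also have "\<dots> \<le> K powr (1 / (1 - \<theta>))" using h th t0 by (intro powr_mono2) auto
  finally have tK: "t \<le> K powr (1 / (1 - \<theta>))" .
  have "t powr \<theta> \<le> (K powr (1 / (1 - \<theta>))) powr \<theta>" using tK t0 th by (intro powr_mono2) auto
  also have "\<dots> = K powr (\<theta> / (1 - \<theta>))" by (simp add: powr_powr)
  finally have "K * t powr \<theta> \<le> K * K powr (\<theta> / (1 - \<theta>))" using K by (intro mult_left_mono) auto
  also have "\<dots> = K powr (1 / (1 - \<theta>))"
  proof (cases "K = 0")
    case True then show ?thesis by simp
  next
    case False
    then have "K * K powr (\<theta> / (1 - \<theta>)) = K powr (1 + \<theta> / (1 - \<theta>))" using K by (simp add: powr_add)
    also have "1 + \<theta> / (1 - \<theta>) = 1 / (1 - \<theta>)" using th by (simp add: field_simps)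
    finally show ?thesis .
  qed
  finally show ?thesis using Z by simp
qed

lemma minus_alg:
  fixes t A L e :: real
  assumes h: "A * t < L * t powr e" and t: "t \<ge> 0" and A: "A > 0" and L: "L > 0" and e: "e > 1"
  shows "t > (A / L) powr (1 / (e - 1))"
proof -
  have t0: "t > 0" using h t by (cases "t = 0") auto
  have "A / L < t powr e / t" using h t0 L by (simp add: field_simps)
  also have "t powr e / t = t powr (e - 1)" using t0 by (simp add: powr_diff)
  finally have h2: "A / L < t powr (e - 1)" .
  have "(A / L) powr (1 / (e - 1)) < (t powr (e - 1)) powr (1 / (e - 1))"
    using h2 A L e by (intro powr_less_mono2) auto
  also have "\<dots> = t" using t0 e by (simp add: powr_powr)
  finally show ?thesis .
qed

lemma integral_le_nn:
  fixes f :: "'a \<Rightarrow> real"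
  assumes le: "(\<integral>\<^sup>+x. ennreal \<bar>f x\<bar> \<partial>M) \<le> ennreal R" and R: "0 \<le> R"
  shows "integral\<^sup>L M f \<le> R"
proof (cases "integrable M f")
  case True
  have "integral\<^sup>L M f \<le> integral\<^sup>L M (\<lambda>x. \<bar>f x\<bar>)"
    using True by (intro integral_mono) auto
  also have "ennreal (integral\<^sup>L M (\<lambda>x. \<bar>f x\<bar>)) = (\<integral>\<^sup>+x. ennreal \<bar>f x\<bar> \<partial>M)"
    using True by (intro nn_integral_eq_integral[symmetric]) auto
  then have "ennreal (integral\<^sup>L M (\<lambda>x. \<bar>f x\<bar>)) \<le> ennreal R" using le by simp
  then have "integral\<^sup>L M (\<lambda>x. \<bar>f x\<bar>) \<le> R" using R by (simp add: ennreal_le_iff)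
  finally show ?thesis .
next
  case False then show ?thesis using R by (simp add: not_integrable_integral_eq)
qed

theorem mainTheorem14:
  fixes \<Omega> :: "(real^'n) set" and H :: "real^'n \<Rightarrow> real"
    and \<mu> a b :: "real^'n \<Rightarrow> real" and p q \<alpha> \<delta> :: real
  assumes "CARD('n) \<ge> 2"
    and "bounded \<Omega>" and "lipschitz_domain \<Omega>"
    and "finsler_minkowski_norm H"
    and "0 < \<delta>" and "\<delta> < 1"
    and "2 \<le> p" and "p < q" and "q < real CARD('n)"
    and "q < \<alpha> + 1" and "\<alpha> + 1 \<le> sobolev_conj (real CARD('n)) p"
    and "q / p < 1 + 1 / real CARD('n)"
    and "\<exists>L. L-lipschitz_on (closure \<Omega>) \<mu>" and "\<forall>x\<in>closure \<Omega>. 0 \<le> \<mu> x"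
    and "a \<in> borel_measurable (lebesgue_on \<Omega>)"
    and "AE x in lebesgue_on \<Omega>. a x > 0"
    and "integrable (lebesgue_on \<Omega>)
           (\<lambda>x. \<bar>a x\<bar> powr (sobolev_conj (real CARD('n)) p
                 / (sobolev_conj (real CARD('n)) p - 1 + \<delta>)))"
    and "b \<in> borel_measurable (lebesgue_on \<Omega>)"
    and "\<exists>C. AE x in lebesgue_on \<Omega>. \<bar>b x\<bar> \<le> C"
    and "\<not> (AE x in lebesgue_on \<Omega>. b x \<le> 0)"
    and "\<alpha> + 1 = sobolev_conj (real CARD('n)) p"
  shows "\<exists>\<Lambda>>0. \<exists>D2>0. \<forall>lam. 0 < lam \<and> lam < \<Lambda> \<longrightarrow>
           (\<exists>D1>D2.
              (\<forall>U G. (U, G) \<in> nehari_minus \<Omega> H \<mu> a b p q \<delta> lam \<longrightarrow>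
                  integral\<^sup>L (lebesgue_on \<Omega>) (\<lambda>x. H (G x) powr p) \<ge> D1)
            \<and> (\<forall>u g. (u, g) \<in> nehari_plus \<Omega> H \<mu> a b p q \<delta> lam \<longrightarrow>
                  integral\<^sup>L (lebesgue_on \<Omega>) (\<lambda>x. H (g x) powr p + \<mu> x * H (g x) powr q) \<le> D2))"
proof -
  define N where "N = real CARD('n)"
  define ps where "ps = sobolev_conj N p"
  have N2: "N \<ge> 2" using assms(1) by (simp add: N_def)
  have p1: "p > 1" using assms(7) by simp
  have pN: "p < N" using assms(8,9) by (simp add: N_def)
  have ps_eq: "ps = real CARD('n) * p / (real CARD('n) - p)" by (simp add: ps_def sobolev_conj_def N_def)
  have qps: "q < ps" using assms(10,21) by (simp add: ps_def N_def)
  have pq: "p < q" by (rule assms(8))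
  have ps1: "ps > 1" using qps pq p1 by simp
  have d0: "0 < \<delta>" "\<delta> < 1" using assms(5,6) by auto
  have Om_open: "open \<Omega>" using assms(3) unfolding lipschitz_domain_def by blast
  obtain c where c: "c > 0" "\<And>\<xi>. c * norm \<xi> \<le> \<bar>H \<xi>\<bar>" using finsler_props(2)[OF assms(4)] by blast
  obtain C where C: "C > 0" "\<And>\<xi>. \<bar>H \<xi>\<bar> \<le> C * norm \<xi>" using finsler_props(3)[OF assms(4)] by blast
  obtain L where L: "L-lipschitz_on (closure \<Omega>) \<mu>" using assms(13) by blast
  have muc: "continuous_on (closure \<Omega>) \<mu>" by (rule lipschitz_on_continuous_on[OF L])
  have "compact (closure \<Omega>)" using assms(2) by (simp add: compact_closure)
  then have "compact (\<mu> ` closure \<Omega>)" by (rule compact_continuous_image[OF muc])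
  then obtain M0 where M0: "\<And>y. y \<in> \<mu> ` closure \<Omega> \<Longrightarrow> norm y \<le> M0" using compact_imp_bounded bounded_iff by metis
  define M\<mu> where "M\<mu> = max M0 0"
  have mu: "0 \<le> \<mu> x \<and> \<mu> x \<le> M\<mu>" if "x \<in> \<Omega>" for x
    using that closure_subset assms(14) M0[of "\<mu> x"] by (force simp: M\<mu>_def)
  have Osets: "\<Omega> \<in> sets lebesgue" using Om_open by simp
  have "\<mu> \<in> borel_measurable (lebesgue_on \<Omega>)"
    by (rule continuous_imp_measurable_on_sets_lebesgue[OF continuous_on_subset[OF muc closure_subset] Osets])
  then have "(\<lambda>x. indicator \<Omega> x *\<^sub>R \<mu> x) \<in> borel_measurable lebesgue"
    using borel_measurable_restrict_space_iff[of \<Omega> lebesgue \<mu>] Osets by simp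
  then have mum: "(\<lambda>x. \<mu> x * indicator \<Omega> x) \<in> borel_measurable lebesgue" by (simp add: mult.commute)
  interpret W: wsetting \<Omega> H \<mu> p q c C M\<mu>
    by unfold_locales (use Om_open assms(2) finsler_props(1)[OF assms(4)] c C mu mum p1 pq in \<open>auto simp: M\<mu>_def\<close>)
  obtain S where S: "S > 0" and Sob: "\<And>u G. (u, G) \<in> W0 \<Omega> H \<mu> p q \<Longrightarrow>
     integrable (lebesgue_on \<Omega>) (\<lambda>x. \<bar>u x\<bar> powr ps) \<and>
     integral\<^sup>L (lebesgue_on \<Omega>) (\<lambda>x. \<bar>u x\<bar> powr ps) \<le> S * (integral\<^sup>L (lebesgue_on \<Omega>) (\<lambda>x. \<bar>H (G x)\<bar> powr p)) powr (ps / p)"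
    using W.W2[OF assms(1) pN[unfolded N_def]] unfolding ps_eq[symmetric] by blast
  define r where "r = ps / (ps - 1 + \<delta>)"
  have r1: "r > 1" using ps1 d0 by (simp add: r_def field_simps)
  have aint: "integrable (lebesgue_on \<Omega>) (\<lambda>x. \<bar>a x\<bar> powr r)"
    using assms(17) by (simp add: r_def ps_def N_def)
  define Ar where "Ar = integral\<^sup>L (lebesgue_on \<Omega>) (\<lambda>x. \<bar>a x\<bar> powr r)"
  have Ar0: "Ar \<ge> 0" unfolding Ar_def by (rule integral_nonneg_AE) auto
  define A0 where "A0 = Ar powr (1 / r)"
  have A00: "A0 \<ge> 0" by (simp add: A0_def)
  have am[measurable]: "a \<in> borel_measurable (lebesgue_on \<Omega>)" by (rule assms(15))
  have bm[measurable]: "b \<in> borel_measurable (lebesgue_on \<Omega>)" by (rule assms(18))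
  have holder_a: "integral\<^sup>L (lebesgue_on \<Omega>) (\<lambda>x. a x * \<bar>u x\<bar> powr (1 - \<delta>))
      \<le> A0 * (integral\<^sup>L (lebesgue_on \<Omega>) (\<lambda>x. \<bar>u x\<bar> powr ps)) powr ((1 - \<delta>) / ps)"
    if uG: "(u, G) \<in> W0 \<Omega> H \<mu> p q" for u G
  proof -
    have "u \<in> borel_measurable lebesgue" using uG unfolding W0_def by blast
    then have um[measurable]: "u \<in> borel_measurable (lebesgue_on \<Omega>)" by (rule measurable_restrict_space1)
    have uint: "integrable (lebesgue_on \<Omega>) (\<lambda>x. \<bar>u x\<bar> powr ps)" using Sob[OF uG] by blast
    define X where "X = integral\<^sup>L (lebesgue_on \<Omega>) (\<lambda>x. \<bar>u x\<bar> powr ps)"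
    have X0: "X \<ge> 0" unfolding X_def by (rule integral_nonneg_AE) auto
    define al where "al = 1 / r"
    have al: "0 < al" "al < 1" using r1 by (auto simp: al_def)
    have al1: "1 - al = (1 - \<delta>) / ps" using ps1 d0 by (simp add: al_def r_def field_simps)
    have pt: "ennreal \<bar>a x * \<bar>u x\<bar> powr (1 - \<delta>)\<bar> = epow (ennreal (\<bar>a x\<bar> powr r)) al * epow (ennreal (\<bar>u x\<bar> powr ps)) (1 - al)" for x
    proof -
      have "epow (ennreal (\<bar>a x\<bar> powr r)) al = ennreal \<bar>a x\<bar>"
        using r1 by (simp add: epow_ennreal powr_powr al_def)
      moreover have "epow (ennreal (\<bar>u x\<bar> powr ps)) (1 - al) = ennreal (\<bar>u x\<bar> powr (1 - \<delta>))"
        using ps1 by (simp add: epow_ennreal powr_powr al1)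
      ultimately show ?thesis by (simp add: abs_mult ennreal_mult)
    qed
    have "(\<integral>\<^sup>+x. ennreal \<bar>a x * \<bar>u x\<bar> powr (1 - \<delta>)\<bar> \<partial>lebesgue_on \<Omega>)
        = (\<integral>\<^sup>+x. epow (ennreal (\<bar>a x\<bar> powr r)) al * epow (ennreal (\<bar>u x\<bar> powr ps)) (1 - al) \<partial>lebesgue_on \<Omega>)"
      by (simp add: pt)
    also have "\<dots> \<le> epow (\<integral>\<^sup>+x. ennreal (\<bar>a x\<bar> powr r) \<partial>lebesgue_on \<Omega>) al * epow (\<integral>\<^sup>+x. ennreal (\<bar>u x\<bar> powr ps) \<partial>lebesgue_on \<Omega>) (1 - al)"
      by (rule holder_ennreal[OF _ _ al]) measurable
    also have "(\<integral>\<^sup>+x. ennreal (\<bar>a x\<bar> powr r) \<partial>lebesgue_on \<Omega>) = ennreal Ar"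
      unfolding Ar_def by (rule nn_integral_eq_integral[OF aint]) auto
    also have "(\<integral>\<^sup>+x. ennreal (\<bar>u x\<bar> powr ps) \<partial>lebesgue_on \<Omega>) = ennreal X"
      unfolding X_def by (rule nn_integral_eq_integral[OF uint]) auto
    also have "epow (ennreal Ar) al * epow (ennreal X) (1 - al) = ennreal (A0 * X powr ((1 - \<delta>) / ps))"
      using Ar0 X0 unfolding al1 by (simp add: epow_ennreal A0_def al_def ennreal_mult)
    finally show ?thesis unfolding X_def
      by (intro integral_le_nn) (use A00 in auto)
  qed
  obtain Cb where Cb: "AE x in lebesgue_on \<Omega>. \<bar>b x\<bar> \<le> Cb" using assms(19) by blast
  define Cb' where "Cb' = max Cb 1"
  have Cb': "Cb' > 0" by (simp add: Cb'_def)
  have bbound: "integrable (lebesgue_on \<Omega>) (\<lambda>x. b x * \<bar>u x\<bar> powr ps) \<and>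
      integral\<^sup>L (lebesgue_on \<Omega>) (\<lambda>x. b x * \<bar>u x\<bar> powr ps) \<le> Cb' * integral\<^sup>L (lebesgue_on \<Omega>) (\<lambda>x. \<bar>u x\<bar> powr ps)"
    if uG: "(u, G) \<in> W0 \<Omega> H \<mu> p q" for u G
  proof -
    have "u \<in> borel_measurable lebesgue" using uG unfolding W0_def by blast
    then have um[measurable]: "u \<in> borel_measurable (lebesgue_on \<Omega>)" by (rule measurable_restrict_space1)
    have uint: "integrable (lebesgue_on \<Omega>) (\<lambda>x. \<bar>u x\<bar> powr ps)" using Sob[OF uG] by blast
    have ae: "AE x in lebesgue_on \<Omega>. \<bar>b x * \<bar>u x\<bar> powr ps\<bar> \<le> Cb' * \<bar>u x\<bar> powr ps"
      using Cb by eventually_elim (auto simp: abs_mult Cb'_def intro!: mult_right_mono)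
    have bint: "integrable (lebesgue_on \<Omega>) (\<lambda>x. b x * \<bar>u x\<bar> powr ps)"
      by (rule Bochner_Integration.integrable_bound[OF integrable_mult_right[OF uint, of Cb']]) (use ae Cb' in auto)
    have "integral\<^sup>L (lebesgue_on \<Omega>) (\<lambda>x. b x * \<bar>u x\<bar> powr ps) \<le> integral\<^sup>L (lebesgue_on \<Omega>) (\<lambda>x. Cb' * \<bar>u x\<bar> powr ps)"
      by (rule integral_mono_AE[OF bint integrable_mult_right[OF uint]]) (use ae in \<open>auto elim: AE_mp\<close>)
    then show ?thesis using bint by simp
  qed
  have key: "\<exists>Ip Iq Ia Ib X.
      dphi1 \<Omega> H \<mu> a b p q \<delta> lam (u, g) = Ip + Iq - Ia - lam * Ib \<and>
      ddphi1 \<Omega> H \<mu> a b p q \<delta> lam (u, g) = (p - 1) * Ip + (q - 1) * Iq + \<delta> * Ia - lam * (ps - 1) * Ib \<and>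
      Ip = integral\<^sup>L (lebesgue_on \<Omega>) (\<lambda>x. H (g x) powr p) \<and>
      Ip + Iq = integral\<^sup>L (lebesgue_on \<Omega>) (\<lambda>x. H (g x) powr p + \<mu> x * H (g x) powr q) \<and>
      0 \<le> Ip \<and> 0 \<le> Iq \<and> 0 \<le> X \<and> X \<le> S * Ip powr (ps / p) \<and> Ia \<le> A0 * X powr ((1 - \<delta>) / ps) \<and> Ib \<le> Cb' * X"
    if ug: "(u, g) \<in> W0 \<Omega> H \<mu> p q" for u g lam
  proof -
    have e1: "H (g x) powr p = \<bar>H (g x)\<bar> powr p" for x by (rule powr_abs_base)
    have e2: "\<mu> x * H (g x) powr q = \<mu> x * \<bar>H (g x)\<bar> powr q" for x using powr_abs_base[of "H (g x)" q] by simp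
    have intp: "integrable (lebesgue_on \<Omega>) (\<lambda>x. H (g x) powr p)" using W.W1(3)[OF ug] by (simp only: e1)
    have intq: "integrable (lebesgue_on \<Omega>) (\<lambda>x. \<mu> x * H (g x) powr q)" using W.W1(4)[OF ug] by (simp only: e2)
    define Ip where "Ip = integral\<^sup>L (lebesgue_on \<Omega>) (\<lambda>x. H (g x) powr p)"
    define Iq where "Iq = integral\<^sup>L (lebesgue_on \<Omega>) (\<lambda>x. \<mu> x * H (g x) powr q)"
    define Ia where "Ia = integral\<^sup>L (lebesgue_on \<Omega>) (\<lambda>x. a x * \<bar>u x\<bar> powr (1 - \<delta>))"
    define Ib where "Ib = integral\<^sup>L (lebesgue_on \<Omega>) (\<lambda>x. b x * \<bar>u x\<bar> powr ps)"
    define X where "X = integral\<^sup>L (lebesgue_on \<Omega>) (\<lambda>x. \<bar>u x\<bar> powr ps)"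
    have sum: "integral\<^sup>L (lebesgue_on \<Omega>) (\<lambda>x. H (g x) powr p + \<mu> x * H (g x) powr q) = Ip + Iq"
      unfolding Ip_def Iq_def by (rule Bochner_Integration.integral_add[OF intp intq])
    have d: "dphi1 \<Omega> H \<mu> a b p q \<delta> lam (u, g) = Ip + Iq - Ia - lam * Ib"
      unfolding dphi1_def Let_def using sum by (simp add: Ia_def Ib_def ps_def N_def)
    have sum2: "integral\<^sup>L (lebesgue_on \<Omega>) (\<lambda>x. (p - 1) * H (g x) powr p + (q - 1) * \<mu> x * H (g x) powr q)
        = (p - 1) * Ip + (q - 1) * Iq"
    proof -
      have "(\<lambda>x. (p - 1) * H (g x) powr p + (q - 1) * \<mu> x * H (g x) powr q)
          = (\<lambda>x. (p - 1) * H (g x) powr p + (q - 1) * (\<mu> x * H (g x) powr q))" by (simp add: mult.assoc)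
      then show ?thesis unfolding Ip_def Iq_def
        using Bochner_Integration.integral_add[OF integrable_mult_right[OF intp, of "p - 1"] integrable_mult_right[OF intq, of "q - 1"]]
        by simp
    qed
    have dd: "ddphi1 \<Omega> H \<mu> a b p q \<delta> lam (u, g) = (p - 1) * Ip + (q - 1) * Iq + \<delta> * Ia - lam * (ps - 1) * Ib"
      unfolding ddphi1_def Let_def using sum2 by (simp add: Ia_def Ib_def ps_def N_def)
    have Ip0: "0 \<le> Ip" unfolding Ip_def by (rule integral_nonneg_AE) auto
    have Iq0: "0 \<le> Iq" unfolding Iq_def by (rule integral_nonneg_AE) (use mu in auto)
    have X0: "0 \<le> X" unfolding X_def by (rule integral_nonneg_AE) auto
    have "integral\<^sup>L (lebesgue_on \<Omega>) (\<lambda>x. \<bar>H (g x)\<bar> powr p) = Ip" unfolding Ip_def by (simp only: e1)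
    then have XS: "X \<le> S * Ip powr (ps / p)" using Sob[OF ug] unfolding X_def by simp
    have Ia: "Ia \<le> A0 * X powr ((1 - \<delta>) / ps)" unfolding Ia_def X_def by (rule holder_a[OF ug])
    have Ib: "Ib \<le> Cb' * X" unfolding Ib_def X_def using bbound[OF ug] by blast
    show ?thesis
      by (intro exI[of _ Ip] exI[of _ Iq] exI[of _ Ia] exI[of _ Ib] exI[of _ X])
         (use d dd sum Ip0 Iq0 X0 XS Ia Ib in \<open>simp add: Ip_def\<close>)
  qed
  define \<theta> where "\<theta> = (1 - \<delta>) / p"
  have th: "0 < \<theta>" "\<theta> < 1" using p1 d0 by (auto simp: \<theta>_def field_simps)
  define K' where "K' = (ps - 1 + \<delta>) * A0 * S powr ((1 - \<delta>) / ps) / (ps - q)"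
  have K'0: "K' \<ge> 0" using ps1 d0 A00 qps by (simp add: K'_def)
  define D2 where "D2 = K' powr (1 / (1 - \<theta>)) + 1"
  have D2pos: "D2 > 0" by (simp add: D2_def add_nonneg_pos)
  define e where "e = ps / p"
  have e1: "e > 1" using qps pq p1 by (simp add: e_def)
  define K2 where "K2 = (ps - 1 + \<delta>) * Cb' * S"
  have K2: "K2 > 0" using ps1 d0 Cb' S by (simp add: K2_def)
  define \<Lambda> where "\<Lambda> = (p - 1 + \<delta>) / (K2 * D2 powr (e - 1))"
  have \<Lambda>0: "\<Lambda> > 0" using p1 d0 K2 D2pos by (simp add: \<Lambda>_def)
  have plus: "integral\<^sup>L (lebesgue_on \<Omega>) (\<lambda>x. H (g x) powr p + \<mu> x * H (g x) powr q) \<le> D2"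
    if ug: "(u, g) \<in> nehari_plus \<Omega> H \<mu> a b p q \<delta> lam" for u g lam
  proof -
    have W: "(u, g) \<in> W0 \<Omega> H \<mu> p q" and dz: "dphi1 \<Omega> H \<mu> a b p q \<delta> lam (u, g) = 0"
      and ddp: "ddphi1 \<Omega> H \<mu> a b p q \<delta> lam (u, g) > 0"
      using ug unfolding nehari_plus_def nehari_def by auto
    obtain Ip Iq Ia Ib X where
      d: "dphi1 \<Omega> H \<mu> a b p q \<delta> lam (u, g) = Ip + Iq - Ia - lam * Ib" and
      dd: "ddphi1 \<Omega> H \<mu> a b p q \<delta> lam (u, g) = (p - 1) * Ip + (q - 1) * Iq + \<delta> * Ia - lam * (ps - 1) * Ib" and
      sum: "Ip + Iq = integral\<^sup>L (lebesgue_on \<Omega>) (\<lambda>x. H (g x) powr p + \<mu> x * H (g x) powr q)" and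
      Ip0: "0 \<le> Ip" and Iq0: "0 \<le> Iq" and X0: "0 \<le> X" and XS: "X \<le> S * Ip powr (ps / p)" and
      Ia: "Ia \<le> A0 * X powr ((1 - \<delta>) / ps)"
      using key[OF W, of lam] by blast
    have E: "ddphi1 \<Omega> H \<mu> a b p q \<delta> lam (u, g) - (ps - 1) * dphi1 \<Omega> H \<mu> a b p q \<delta> lam (u, g)
        = (p - ps) * Ip + (q - ps) * Iq + (\<delta> + ps - 1) * Ia"
      unfolding d dd by (simp add: algebra_simps)
    have E2: "(ps - p) * Ip + (ps - q) * Iq < (ps - 1 + \<delta>) * Ia"
      using E dz ddp by (simp add: algebra_simps)
    have E3: "(ps - q) * (Ip + Iq) \<le> (ps - p) * Ip + (ps - q) * Iq"
      using mult_right_mono[of "ps - q" "ps - p" Ip] pq Ip0 by (simp add: algebra_simps)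
    have "X powr ((1 - \<delta>) / ps) \<le> (S * Ip powr e) powr ((1 - \<delta>) / ps)"
      using XS X0 d0 ps1 by (intro powr_mono2) (auto simp: e_def)
    also have "\<dots> = S powr ((1 - \<delta>) / ps) * Ip powr \<theta>"
    proof -
      have "e * ((1 - \<delta>) / ps) = \<theta>" using ps1 p1 by (simp add: e_def \<theta>_def)
      then show ?thesis by (simp add: powr_mult powr_powr)
    qed
    finally have Xb: "X powr ((1 - \<delta>) / ps) \<le> S powr ((1 - \<delta>) / ps) * Ip powr \<theta>" .
    have "Ia \<le> A0 * (S powr ((1 - \<delta>) / ps) * Ip powr \<theta>)"
      using Ia mult_left_mono[OF Xb A00] by linarith
    then have "(ps - 1 + \<delta>) * Ia \<le> (ps - 1 + \<delta>) * (A0 * (S powr ((1 - \<delta>) / ps) * Ip powr \<theta>))"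
      using ps1 d0 by (intro mult_left_mono) auto
    then have "(ps - q) * (Ip + Iq) < (ps - 1 + \<delta>) * (A0 * (S powr ((1 - \<delta>) / ps) * Ip powr \<theta>))"
      using E2 E3 by linarith
    then have "Ip + Iq \<le> K' * Ip powr \<theta>"
      using qps by (simp add: K'_def field_simps)
    then have "Ip + Iq \<le> K' powr (1 / (1 - \<theta>))"
      by (rule plus_alg[OF _ Ip0 _ th K'0]) (use Iq0 in simp)
    then show ?thesis using sum by (simp add: D2_def)
  qed
  have minus: "integral\<^sup>L (lebesgue_on \<Omega>) (\<lambda>x. H (G x) powr p) > ((p - 1 + \<delta>) / (lam * K2)) powr (1 / (e - 1))"
    if UG: "(U, G) \<in> nehari_minus \<Omega> H \<mu> a b p q \<delta> lam" and lam: "lam > 0" for U G lam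
  proof -
    have W: "(U, G) \<in> W0 \<Omega> H \<mu> p q" and dz: "dphi1 \<Omega> H \<mu> a b p q \<delta> lam (U, G) = 0"
      and ddm: "ddphi1 \<Omega> H \<mu> a b p q \<delta> lam (U, G) < 0"
      using UG unfolding nehari_minus_def nehari_def by auto
    obtain Ip Iq Ia Ib X where
      d: "dphi1 \<Omega> H \<mu> a b p q \<delta> lam (U, G) = Ip + Iq - Ia - lam * Ib" and
      dd: "ddphi1 \<Omega> H \<mu> a b p q \<delta> lam (U, G) = (p - 1) * Ip + (q - 1) * Iq + \<delta> * Ia - lam * (ps - 1) * Ib" and
      IpI: "Ip = integral\<^sup>L (lebesgue_on \<Omega>) (\<lambda>x. H (G x) powr p)" and
      Ip0: "0 \<le> Ip" and Iq0: "0 \<le> Iq" and X0: "0 \<le> X" and XS: "X \<le> S * Ip powr (ps / p)" and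
      Ib: "Ib \<le> Cb' * X"
      using key[OF W, of lam] by blast
    have E: "ddphi1 \<Omega> H \<mu> a b p q \<delta> lam (U, G) + \<delta> * dphi1 \<Omega> H \<mu> a b p q \<delta> lam (U, G)
        = (p - 1 + \<delta>) * Ip + (q - 1 + \<delta>) * Iq - lam * (ps - 1 + \<delta>) * Ib"
      unfolding d dd by (simp add: algebra_simps)
    have E2: "(p - 1 + \<delta>) * Ip < lam * (ps - 1 + \<delta>) * Ib"
    proof -
      have "(q - 1 + \<delta>) * Iq \<ge> 0" using Iq0 pq p1 d0 by simp
      moreover have "\<delta> * dphi1 \<Omega> H \<mu> a b p q \<delta> lam (U, G) = 0" using dz by simp
      ultimately show ?thesis using E ddm by linarith
    qed
    have "lam * (ps - 1 + \<delta>) * Ib \<le> lam * (ps - 1 + \<delta>) * (Cb' * X)"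
      using Ib lam ps1 d0 by (intro mult_left_mono) auto
    also have "\<dots> \<le> lam * (ps - 1 + \<delta>) * (Cb' * (S * Ip powr e))"
      using XS Cb' lam ps1 d0 by (intro mult_left_mono) (auto simp: e_def)
    also have "\<dots> = (lam * K2) * Ip powr e" by (simp add: K2_def)
    finally have "(p - 1 + \<delta>) * Ip < (lam * K2) * Ip powr e" using E2 by linarith
    then have "Ip > ((p - 1 + \<delta>) / (lam * K2)) powr (1 / (e - 1))"
      by (rule minus_alg[OF _ Ip0 _ _ e1]) (use p1 d0 lam K2 in auto)
    then show ?thesis using IpI by simp
  qed
  have D1D2: "((p - 1 + \<delta>) / (lam * K2)) powr (1 / (e - 1)) > D2" if lam: "0 < lam" "lam < \<Lambda>" for lam
  proof -
    have pos: "K2 * D2 powr (e - 1) > 0" using K2 D2pos by simp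
    have "lam * (K2 * D2 powr (e - 1)) < p - 1 + \<delta>"
      using lam pos unfolding \<Lambda>_def by (simp add: less_divide_eq)
    then have h: "D2 powr (e - 1) < (p - 1 + \<delta>) / (lam * K2)"
      using lam K2 by (simp add: less_divide_eq field_simps)
    have "D2 = (D2 powr (e - 1)) powr (1 / (e - 1))" using D2pos e1 by (simp add: powr_powr)
    also have "\<dots> < ((p - 1 + \<delta>) / (lam * K2)) powr (1 / (e - 1))"
      using h e1 by (intro powr_less_mono2) auto
    finally show ?thesis .
  qed
  have main: "\<forall>lam. 0 < lam \<and> lam < \<Lambda> \<longrightarrow> (\<exists>D1>D2. (\<forall>U G. (U, G) \<in> nehari_minus \<Omega> H \<mu> a b p q \<delta> lam \<longrightarrow>
                  integral\<^sup>L (lebesgue_on \<Omega>) (\<lambda>x. H (G x) powr p) \<ge> D1)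
            \<and> (\<forall>u g. (u, g) \<in> nehari_plus \<Omega> H \<mu> a b p q \<delta> lam \<longrightarrow>
                  integral\<^sup>L (lebesgue_on \<Omega>) (\<lambda>x. H (g x) powr p + \<mu> x * H (g x) powr q) \<le> D2))"
  proof (intro allI impI)
    fix lam assume lam: "0 < lam \<and> lam < \<Lambda>"
    show "\<exists>D1>D2. (\<forall>U G. (U, G) \<in> nehari_minus \<Omega> H \<mu> a b p q \<delta> lam \<longrightarrow>
                  integral\<^sup>L (lebesgue_on \<Omega>) (\<lambda>x. H (G x) powr p) \<ge> D1)
            \<and> (\<forall>u g. (u, g) \<in> nehari_plus \<Omega> H \<mu> a b p q \<delta> lam \<longrightarrow>
                  integral\<^sup>L (lebesgue_on \<Omega>) (\<lambda>x. H (g x) powr p + \<mu> x * H (g x) powr q) \<le> D2)"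
      using D1D2[of lam] lam minus[of _ _ lam] plus[of _ _ lam]
      by (intro exI[of _ "((p - 1 + \<delta>) / (lam * K2)) powr (1 / (e - 1))"]) (auto intro: less_imp_le)
  qed
  show ?thesis using main \<Lambda>0 D2pos by blast
qed

end
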